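(* Let $\mathcal X,\mathcal Y$ be Polish spaces and $(\mu,\nu)\in\mathcal P(\mathcal X)\times\mathcal P(\mathcal Y)$. Let $\mathbf X$ be a one-time-step stochastic process $(X_1=X,X_2=Y)$ with filtration $(\mathcal F_t)_{t=1}^2$ on some probability space such that $X\sim\mu$ and $Y\sim\nu$. Then there exists $P^{\mathbf X}\in\Lambda(\mu,\nu)$ with \[ \mathbb E\big[F(X,\mathscr L(Y|\mathcal F_1))\big]=\int_{\mathcal X\times\mathcal P(\mathcal Y)}F(x,p)\,P^{\mathbf X}(dx,dp)\qquad(\ast) \] for all measurable $F:\mathcal X\times\mathcal P(\mathcal Y)\to\overline{\mathbb{R}}$ for which the left-hand side of $(\ast)$ is well-defined. Conversely, any $P\in\Lambda(\mu,\nu)$ induces such a process $\mathbf X$ with $X\sim\mu$ and $Y\sim\nu$ such that $(\ast)$ holds with $P^{\mathbf X}=P$ for any $F$ for which the right-hand side of $(\ast)$ is well-defined.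
   Context: $\overline{\mathbb{R}}=\mathbb{R}\cup\{\pm\infty\}$; $\mathscr L(Y|\mathcal F_1)$ is the conditional law (regular conditional distribution) of $Y$ given $\mathcal F_1$. $\mathcal P(\mathcal Y)$ carries the weak topology. The intensity map $\hat I:\mathcal P(\mathcal X\times\mathcal P(\mathcal Y))\to\mathcal P(\mathcal X\times\mathcal Y)$ is defined by $\hat I(P)(f)=\int\int f(x,y)\,p(dy)\,P(dx,dp)$ for bounded continuous $f$, and $\Lambda(\mu,\nu):=\{P\in\mathcal P(\mathcal X\times\mathcal P(\mathcal Y)):\hat I(P)\text{ has marginals }\mu,\nu\}$. *)

theory Defs
  imports "HOL-Probability.Probability"
begin

definition probs :: "'b::topological_space measure set" where
  "probs = {p. prob_space p \<and> sets p = sets borel}"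

definition weak_topology :: "'b::topological_space measure topology" where
  "weak_topology = topology_generated_by
     (insert probs
       {{p \<in> probs. (\<integral>y. f y \<partial>p) \<in> U} | f U.
          continuous_on UNIV (f :: 'b \<Rightarrow> real) \<and> bounded (range f) \<and> open U})"

definition PY :: "'b::topological_space measure measure" where
  "PY = sigma probs {S. openin weak_topology S}"

definition XPY :: "('a::topological_space \<times> 'b::topological_space measure) measure" where
  "XPY = borel \<Otimes>\<^sub>M PY"

definition is_intensity ::
  "('a::topological_space \<times> 'b::topological_space measure) measure \<Rightarrow> ('a \<times> 'b) measure \<Rightarrow> bool" where
  "is_intensity P Q \<longleftrightarrow> prob_space Q \<and> sets Q = sets (borel \<Otimes>\<^sub>M borel) \<and>
     (\<forall>f :: 'a \<times> 'b \<Rightarrow> real. continuous_on UNIV f \<and> bounded (range f) \<longrightarrow>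
        (\<integral>z. f z \<partial>Q) = (\<integral>xp. (\<integral>y. f (fst xp, y) \<partial>(snd xp)) \<partial>P))"

definition Lambda ::
  "'a::topological_space measure \<Rightarrow> 'b::topological_space measure \<Rightarrow> ('a \<times> 'b measure) measure set" where
  "Lambda \<mu> \<nu> = {P. prob_space P \<and> sets P = sets XPY \<and>
     (\<exists>Q. is_intensity P Q \<and> distr Q borel fst = \<mu> \<and> distr Q borel snd = \<nu>)}"

definition ext_integrable :: "'c measure \<Rightarrow> ('c \<Rightarrow> ereal) \<Rightarrow> bool" where
  "ext_integrable M f \<longleftrightarrow>
     (\<integral>\<^sup>+x. e2ennreal (f x) \<partial>M) < \<infinity> \<or> (\<integral>\<^sup>+x. e2ennreal (- f x) \<partial>M) < \<infinity>"

definition ext_integral :: "'c measure \<Rightarrow> ('c \<Rightarrow> ereal) \<Rightarrow> ereal" where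
  "ext_integral M f =
     enn2ereal (\<integral>\<^sup>+x. e2ennreal (f x) \<partial>M) - enn2ereal (\<integral>\<^sup>+x. e2ennreal (- f x) \<partial>M)"

definition one_step_process ::
  "'c measure \<Rightarrow> 'c measure \<Rightarrow> 'c measure \<Rightarrow> ('c \<Rightarrow> 'a::topological_space) \<Rightarrow> ('c \<Rightarrow> 'b::topological_space) \<Rightarrow> bool" where
  "one_step_process M F1 F2 X Y \<longleftrightarrow> prob_space M \<and> subalgebra M F2 \<and> subalgebra F2 F1 \<and>
     X \<in> borel_measurable F1 \<and> Y \<in> borel_measurable F2"

definition is_cond_law ::
  "'c measure \<Rightarrow> 'c measure \<Rightarrow> ('c \<Rightarrow> 'b::topological_space) \<Rightarrow> ('c \<Rightarrow> 'b measure) \<Rightarrow> bool" where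
  "is_cond_law M F1 Y \<kappa> \<longleftrightarrow>
     (\<forall>\<omega>\<in>space M. \<kappa> \<omega> \<in> probs) \<and>
     (\<forall>B\<in>sets borel. (\<lambda>\<omega>. emeasure (\<kappa> \<omega>) B) \<in> borel_measurable F1 \<and>
        (\<forall>A\<in>sets F1. emeasure M (A \<inter> Y -` B \<inter> space M) = (\<integral>\<^sup>+\<omega>\<in>A. emeasure (\<kappa> \<omega>) B \<partial>M)))"

end

theory Submission
  imports Defs
begin

lemma openin_weak_sub: "openin weak_topology S \<Longrightarrow> S \<subseteq> probs"
proof -
  assume "openin weak_topology S"
  hence "S \<subseteq> topspace weak_topology" by (rule openin_subset)
  also have "topspace weak_topology = probs"
    unfolding weak_topology_def topology_generated_by_topspace by auto
  finally show ?thesis .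
qed

lemma space_PY[simp]: "space PY = probs"
  unfolding PY_def by (rule space_measure_of) (auto dest: openin_weak_sub)

lemma sets_PY: "sets PY = sigma_sets probs {S. openin weak_topology S}"
  unfolding PY_def by (rule sets_measure_of) (auto dest: openin_weak_sub)

lemma open_in_PY: "openin weak_topology S \<Longrightarrow> S \<in> sets PY"
  unfolding sets_PY by auto

lemma subbasis_in_PY:
  fixes f :: "'b::topological_space \<Rightarrow> real"
  assumes "continuous_on UNIV f" "bounded (range f)" "open U"
  shows "{p \<in> probs. (\<integral>y. f y \<partial>p) \<in> U} \<in> sets PY"
  apply (rule open_in_PY)
  unfolding weak_topology_def
  apply (rule topology_generated_by_Basis)
  using assms by blast

lemma integral_meas_PY:
  fixes f :: "'b::topological_space \<Rightarrow> real"
  assumes "continuous_on UNIV f" "bounded (range f)"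
  shows "(\<lambda>p. \<integral>y. f y \<partial>p) \<in> borel_measurable (PY :: 'b measure measure)"
proof (rule borel_measurableI)
  fix U :: "real set" assume "open U"
  have "(\<lambda>p. \<integral>y. f y \<partial>p) -` U \<inter> space PY = {p \<in> probs. (\<integral>y. f y \<partial>p) \<in> U}"
    by auto
  then show "(\<lambda>p. \<integral>y. f y \<partial>p) -` U \<inter> space (PY :: 'b measure measure) \<in> sets PY"
    using subbasis_in_PY[OF assms \<open>open U\<close>] by simp
qed

definition cfun :: "'b::metric_space set \<Rightarrow> nat \<Rightarrow> 'b \<Rightarrow> real" where
  "cfun C n z = max 0 (1 - real n * infdist z C)"

lemma cfun_cont: "continuous_on UNIV (cfun C n)"
  unfolding cfun_def by (intro continuous_intros)

lemma cfun_bounds: "0 \<le> cfun C n z" "cfun C n z \<le> 1"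
  unfolding cfun_def using infdist_nonneg[of z C] by auto

lemma cfun_bounded: "bounded (range (cfun C n))"
  unfolding bounded_iff
proof (intro exI[of _ 1] ballI)
  fix x assume "x \<in> range (cfun C n)"
  then obtain z where "x = cfun C n z" by auto
  then show "norm x \<le> 1" using cfun_bounds[of C n z] by simp
qed

lemma cfun_lim:
  fixes C :: "'b::metric_space set"
  assumes "closed C" "C \<noteq> {}"
  shows "(\<lambda>n. cfun C n z) \<longlonglongrightarrow> indicator C z"
proof (cases "z \<in> C")
  case True
  then show ?thesis by (simp add: cfun_def)
next
  case False
  then have d: "infdist z C > 0"
    using in_closed_iff_infdist_zero[OF assms] infdist_nonneg[of z C] by auto
  obtain N :: nat where N: "1 / infdist z C < real N" using reals_Archimedean2 by blast
  have "eventually (\<lambda>n. cfun C n z = 0) sequentially"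
    unfolding eventually_sequentially
  proof (intro exI allI impI)
    fix n assume "N \<le> n"
    then have "1 / infdist z C < real n" using N by linarith
    then have "1 < real n * infdist z C" using d by (simp add: field_simps)
    then show "cfun C n z = 0" by (simp add: cfun_def)
  qed
  then have "(\<lambda>n. cfun C n z) \<longlonglongrightarrow> 0" by (rule tendsto_eventually)
  then show ?thesis using False by simp
qed

lemma cfun_integral_lim:
  fixes C :: "'b::metric_space set"
  assumes "closed C" "C \<noteq> {}" "finite_measure p" "sets p = sets borel"
  shows "(\<lambda>n. \<integral>z. cfun C n z \<partial>p) \<longlonglongrightarrow> measure p C"
proof -
  interpret finite_measure p by fact
  have mC: "C \<in> sets p" using assms by simp
  have "(\<lambda>n. \<integral>z. cfun C n z \<partial>p) \<longlonglongrightarrow> (\<integral>z. indicator C z \<partial>p)"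
  proof (rule integral_dominated_convergence[where w="\<lambda>_. 1"])
    show "indicator C \<in> borel_measurable p" using mC by simp
    show "\<And>i. cfun C i \<in> borel_measurable p"
      unfolding measurable_cong_sets[OF assms(4) refl] by (rule borel_measurable_continuous_onI[OF cfun_cont])
    show "integrable p (\<lambda>_. 1::real)" by simp
    show "AE x in p. (\<lambda>i. cfun C i x) \<longlonglongrightarrow> indicator C x" using cfun_lim[OF assms(1,2)] by simp
    show "\<And>i. AE x in p. norm (cfun C i x) \<le> 1"
    proof (intro AE_I2)
      fix i x show "norm (cfun C i x) \<le> 1" using cfun_bounds[of C i x] by simp
    qed
  qed
  moreover have "(\<integral>z. indicator C z \<partial>p) = measure p C"
    using mC by (simp add: Int_absorb2 sets.sets_into_space)
  ultimately show ?thesis by simp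
qed

lemma emeasure_open_meas_PY:
  fixes G :: "'b::metric_space set"
  assumes "open G"
  shows "(\<lambda>p. emeasure p G) \<in> borel_measurable (PY :: 'b measure measure)"
proof (cases "G = UNIV")
  case True
  have "(\<lambda>p. emeasure p G) \<in> borel_measurable PY \<longleftrightarrow> (\<lambda>p. 1::ennreal) \<in> borel_measurable (PY :: 'b measure measure)"
    apply (rule measurable_cong)
    using True apply (auto simp: probs_def)
    subgoal for w using prob_space.emeasure_space_1[of w] sets_eq_imp_space_eq[of w borel] by simp
    done
  then show ?thesis by simp
next
  case False
  define C where "C = - G"
  have C: "closed C" "C \<noteq> {}" using assms False by (auto simp: C_def)
  have "(\<lambda>p. measure p C) \<in> borel_measurable (PY :: 'b measure measure)"
  proof (rule borel_measurable_LIMSEQ_real)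
    show "\<And>p. p \<in> space PY \<Longrightarrow> (\<lambda>n. \<integral>z. cfun C n z \<partial>p) \<longlonglongrightarrow> measure p C"
      using C by (auto simp: probs_def prob_space_def intro!: cfun_integral_lim)
    show "\<And>n. (\<lambda>p. \<integral>z. cfun C n z \<partial>p) \<in> borel_measurable PY"
      by (rule integral_meas_PY[OF cfun_cont cfun_bounded])
  qed
  then have m: "(\<lambda>p. ennreal (1 - measure p C)) \<in> borel_measurable (PY :: 'b measure measure)"
    by measurable
  show ?thesis
  proof (subst measurable_cong)
    fix p assume "p \<in> space (PY :: 'b measure measure)"
    then have p: "prob_space p" "sets p = sets borel" by (auto simp: probs_def)
    interpret prob_space p by fact
    have "G = space p - C" using p(2) by (auto simp: C_def dest: sets_eq_imp_space_eq)
    moreover have "C \<in> sets p" using p(2) C by simp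
    ultimately show "emeasure p G = ennreal (1 - measure p C)"
      using prob_compl emeasure_eq_measure by simp
  qed (rule m)
qed

lemma PY_subprob: "(\<lambda>p. p) \<in> measurable (PY :: 'b::metric_space measure measure) (subprob_algebra borel)"
proof (rule measurable_subprob_algebra_generated[where G="Collect open" and \<Omega>=UNIV])
  show "sets borel = sigma_sets UNIV (Collect open)" by (simp add: sets_borel)
  show "Int_stable (Collect open)" by (auto simp: Int_stable_def)
  show "Collect open \<subseteq> Pow UNIV" by simp
  show "\<And>a. a \<in> space PY \<Longrightarrow> subprob_space a"
    by (auto simp: probs_def prob_space_imp_subprob_space)
  show "\<And>a. a \<in> space PY \<Longrightarrow> sets a = sets borel" by (auto simp: probs_def)
  fix A :: "'b set" assume "A \<in> Collect open"
  then show "(\<lambda>a. emeasure a A) \<in> borel_measurable PY"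
    using emeasure_open_meas_PY[of A] by simp
next
  show "(\<lambda>a. emeasure a (UNIV::'b set)) \<in> borel_measurable PY"
    using emeasure_open_meas_PY[of UNIV] by simp
qed

definition BB :: "'b::second_countable_topology set set" where
  "BB = (SOME B. countable B \<and> topological_basis B)"

lemma BB: "countable BB" "topological_basis BB"
  using someI_ex[OF ex_countable_basis] unfolding BB_def by auto

definition GG :: "'b::second_countable_topology set set" where
  "GG = {\<Union>F | F. finite F \<and> F \<subseteq> BB}"

lemma countable_GG: "countable (GG :: 'b::second_countable_topology set set)"
proof -
  have "(GG :: 'b set set) = Union ` {F. finite F \<and> F \<subseteq> BB}" unfolding GG_def by auto
  moreover have "countable (Union ` {F. finite F \<and> F \<subseteq> (BB :: 'b set set)})"
    by (rule countable_image[OF countable_Collect_finite_subset[OF BB(1)]])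
  ultimately show ?thesis by simp
qed

lemma GG_open: "H \<in> GG \<Longrightarrow> open H"
  unfolding GG_def using BB(2) topological_basis_open by blast

lemma G_approx:
  fixes G :: "'b::second_countable_topology set"
  assumes "open G" "finite_measure p" "sets p = sets borel" "\<delta> > 0"
  shows "\<exists>H\<in>GG. H \<subseteq> G \<and> measure p G - \<delta> < measure p H"
proof -
  interpret finite_measure p by fact
  obtain B' where B': "B' \<subseteq> BB" "\<Union>B' = G"
    using BB(2) assms(1) unfolding topological_basis_def by blast
  have cB': "countable B'" using B'(1) BB(1) countable_subset by blast
  show ?thesis
  proof (cases "B' = {}")
    case True
    then have "G = {}" using B' by auto
    moreover have "{} \<in> GG" unfolding GG_def by (intro CollectI exI[of _ "{}"]) auto
    ultimately show ?thesis using assms(4) by (intro bexI[of _ "{}"]) auto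
  next
    case False
    define b where "b = from_nat_into B'"
    have rb: "range b = B'" unfolding b_def using False cB' by simp
    define Hs where "Hs n = \<Union>(b ` {..<n})" for n
    have Hs_sets: "range Hs \<subseteq> sets p"
    proof -
      { fix n have "open (Hs n)" unfolding Hs_def
          by (intro open_UN ballI topological_basis_open[OF BB(2)]) (use rb B'(1) in auto) }
      then show ?thesis using assms(3) by auto
    qed
    have inc: "incseq Hs" unfolding Hs_def incseq_def by (intro allI impI UN_mono) auto
    have UHs: "(\<Union>n. Hs n) = G"
    proof -
      have "(\<Union>n. Hs n) = \<Union>(range b)" unfolding Hs_def by (auto intro: lessI)
      then show ?thesis using rb B' by simp
    qed
    have "(\<lambda>n. measure p (Hs n)) \<longlonglongrightarrow> measure p G"
      using finite_Lim_measure_incseq[OF Hs_sets inc] UHs by simp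
    moreover have "measure p G - \<delta> < measure p G" using assms(4) by simp
    ultimately have "eventually (\<lambda>n. measure p G - \<delta> < measure p (Hs n)) sequentially"
      by (rule order_tendstoD(1))
    then obtain n where n: "measure p G - \<delta> < measure p (Hs n)"
      by (auto simp: eventually_sequentially)
    have "Hs n \<in> GG" unfolding GG_def Hs_def
      by (intro CollectI exI[of _ "b ` {..<n}"]) (use rb B'(1) in auto)
    moreover have "Hs n \<subseteq> G" using UHs by blast
    ultimately show ?thesis using n by blast
  qed
qed

lemma card_lower:
  fixes t :: real
  assumes "0 \<le> t"
  shows "real (card {k\<in>{1..N::nat}. real k < t}) \<le> t"
proof (cases "{k\<in>{1..N::nat}. real k < t} = {}")
  case True
  have c0: "card {k\<in>{1..N::nat}. real k < t} = 0" unfolding True by (rule card.empty)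
  show ?thesis by (simp only: c0 of_nat_0 assms)
next
  case False
  define A where "A = {k\<in>{1..N::nat}. real k < t}"
  have fA: "finite A" unfolding A_def by simp
  have "Max A \<in> A" using False fA Max_in unfolding A_def by blast
  then have m: "real (Max A) < t" unfolding A_def by simp
  have "A \<subseteq> {1..Max A}" using fA A_def by auto
  then have "card A \<le> card {1..Max A}" by (intro card_mono) auto
  then have "card A \<le> Max A" by simp
  then show ?thesis using m unfolding A_def by linarith
qed

lemma card_upper:
  fixes t :: real
  assumes "t \<le> real N"
  shows "t \<le> real (card {k\<in>{0..<N::nat}. real k < t})"
proof (cases "\<forall>k<N. real k < t")
  case True
  then have "{k\<in>{0..<N::nat}. real k < t} = {0..<N}" by auto
  then show ?thesis using assms by simp
next
  case False
  then have ex: "\<exists>k. k < N \<and> t \<le> real k" by auto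
  define k0 where "k0 = (LEAST k. k < N \<and> t \<le> real k)"
  have k0: "k0 < N \<and> t \<le> real k0" unfolding k0_def by (rule LeastI_ex[OF ex])
  have "{0..<k0} \<subseteq> {k\<in>{0..<N::nat}. real k < t}"
  proof
    fix k assume "k \<in> {0..<k0}"
    then have "k < k0" by simp
    then have "\<not> (k < N \<and> t \<le> real k)" unfolding k0_def using not_less_Least by blast
    then show "k \<in> {k\<in>{0..<N::nat}. real k < t}" using \<open>k < k0\<close> k0 by auto
  qed
  then have "card {0..<k0} \<le> card {k\<in>{0..<N::nat}. real k < t}" by (intro card_mono) auto
  then show ?thesis using k0 by simp
qed

lemma sum_ind_card: "finite A \<Longrightarrow> (\<Sum>k\<in>A. indicator {y. real k * c < g y} y) = real (card {k\<in>A. real k * c < (g y::real)})"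
proof -
  assume "finite A"
  have "(\<Sum>k\<in>A. indicator {y. real k * c < g y} y) = (\<Sum>k\<in>A. (of_bool (real k * c < g y) :: real))"
    by (simp add: indicator_def)
  also have "\<dots> = real (card (A \<inter> {k. real k * c < g y}))"
    using \<open>finite A\<close> by simp
  also have "A \<inter> {k. real k * c < g y} = {k\<in>A. real k * c < g y}" by auto
  finally show ?thesis .
qed

lemma pointwise_lower:
  fixes g :: "'b \<Rightarrow> real"
  assumes "0 \<le> g y" "c > 0"
  shows "(\<Sum>k\<in>{1..N}. c * indicator {y. real k * c < g y} y) \<le> g y"
proof -
  have "(\<Sum>k\<in>{1..N}. c * indicator {y. real k * c < g y} y) = c * real (card {k\<in>{1..N}. real k * c < g y})"
    by (simp add: sum_distrib_left[symmetric] sum_ind_card)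
  also have "{k\<in>{1..N}. real k * c < g y} = {k\<in>{1..N}. real k < g y / c}"
    using assms by (simp add: field_simps)
  also have "c * real (card \<dots>) \<le> c * (g y / c)"
    using card_lower[of "g y / c" N] assms by (intro mult_left_mono) auto
  also have "\<dots> = g y" using assms by simp
  finally show ?thesis .
qed

lemma pointwise_upper:
  fixes g :: "'b \<Rightarrow> real"
  assumes "g y \<le> real N * c" "c > 0"
  shows "g y \<le> (\<Sum>k\<in>{0..<N}. c * indicator {y. real k * c < g y} y)"
proof -
  have "g y = c * (g y / c)" using assms by simp
  also have "\<dots> \<le> c * real (card {k\<in>{0..<N}. real k < g y / c})"
    using card_upper[of "g y / c" N] assms by (intro mult_left_mono) (auto simp: field_simps)
  also have "{k\<in>{0..<N}. real k < g y / c} = {k\<in>{0..<N}. real k * c < g y}"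
    using assms by (simp add: field_simps)
  also have "c * real (card \<dots>) = (\<Sum>k\<in>{0..<N}. c * indicator {y. real k * c < g y} y)"
    by (simp add: sum_distrib_left[symmetric] sum_ind_card)
  finally show ?thesis .
qed

lemma probsD: "p \<in> probs \<Longrightarrow> prob_space p" "p \<in> probs \<Longrightarrow> sets p = sets borel"
  by (auto simp: probs_def)

lemma probs_integrable:
  fixes f :: "'b::topological_space \<Rightarrow> real"
  assumes "continuous_on UNIV f" "bounded (range f)" "p \<in> probs"
  shows "integrable p f"
proof -
  interpret prob_space p using probsD assms(3) by blast
  obtain B where B: "\<forall>x\<in>range f. norm x \<le> B" using assms(2) unfolding bounded_iff by blast
  show ?thesis
  proof (rule integrable_const_bound[where B=B])
    show "AE x in p. norm (f x) \<le> B" using B by auto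
    show "f \<in> borel_measurable p"
      unfolding measurable_cong_sets[OF probsD(2)[OF assms(3)] refl]
      by (rule borel_measurable_continuous_onI[OF assms(1)])
  qed
qed

lemma integral_sum_ind:
  assumes "p \<in> probs" "finite A" "\<And>k. k \<in> A \<Longrightarrow> open (G k)"
  shows "(\<integral>y. (\<Sum>k\<in>A. c * indicator (G k) y) \<partial>p) = (\<Sum>k\<in>A. c * measure p (G k))"
proof -
  interpret prob_space p using probsD assms(1) by blast
  have sp: "space p = UNIV" using probsD(2)[OF assms(1)] by (metis sets_eq_imp_space_eq space_borel)
  have m: "\<And>k. k \<in> A \<Longrightarrow> G k \<in> sets p" using assms(3) probsD(2)[OF assms(1)] by simp
  have "(\<integral>y. (\<Sum>k\<in>A. c * indicator (G k) y) \<partial>p) = (\<Sum>k\<in>A. \<integral>y. c * indicator (G k) y \<partial>p)"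
    by (rule Bochner_Integration.integral_sum[where f="\<lambda>k y. c * indicator (G k) y"]) (use m in \<open>auto intro!: integrable_mult_right simp: emeasure_eq_measure\<close>)
  also have "\<dots> = (\<Sum>k\<in>A. c * measure p (G k))"
    by (intro sum.cong refl) (simp add: sp)
  finally show ?thesis .
qed

lemma key_lower:
  fixes f :: "'b::second_countable_topology \<Rightarrow> real"
  assumes fc: "continuous_on UNIV f" and fb: "bounded (range f)" and p: "p \<in> probs" and e: "\<epsilon> > 0"
  shows "\<exists>S. finite S \<and> S \<subseteq> GG \<times> UNIV \<and> (\<forall>(H,r)\<in>S. of_rat r < measure p H) \<and>
     (\<forall>q\<in>probs. (\<forall>(H,r)\<in>S. of_rat r < measure q H) \<longrightarrow> (\<integral>y. f y \<partial>p) - \<epsilon> < (\<integral>y. f y \<partial>q))"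
proof -
  obtain B where B: "\<forall>x\<in>range f. norm x \<le> B" using fb unfolding bounded_iff by blast
  define K where "K = max B 1"
  have K1: "\<bar>f y\<bar> \<le> K" for y
  proof -
    have "norm (f y) \<le> B" using B by auto
    then show ?thesis unfolding K_def by simp
  qed
  have K: "\<And>y. \<bar>f y\<bar> \<le> K" "K > 0" using K1 unfolding K_def by auto
  define Mx where "Mx = 2 * K"
  define g where "g y = f y + K" for y
  have g0: "\<And>y. 0 \<le> g y" and gM: "\<And>y. g y \<le> Mx"
    using K(1) unfolding g_def Mx_def by (smt (verit))+
  have Mx0: "Mx > 0" using K unfolding Mx_def by simp
  obtain N :: nat where N: "2 * Mx / \<epsilon> < real N" using reals_Archimedean2 by blast
  have N0: "N > 0" using N Mx0 e by (metis divide_pos_pos gr0I less_eq_real_def mult_pos_pos of_nat_0 zero_less_numeral not_less)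
  define c where "c = Mx / real N"
  have c0: "c > 0" using Mx0 N0 unfolding c_def by simp
  have ce: "c < \<epsilon> / 2"
  proof -
    have "2 * Mx < \<epsilon> * real N" using N e by (simp add: field_simps)
    then show ?thesis unfolding c_def using N0 by (simp add: field_simps)
  qed
  have Nc: "real N * c = Mx" unfolding c_def using N0 by simp
  define \<delta> where "\<delta> = \<epsilon> / (2 * Mx)"
  have \<delta>0: "\<delta> > 0" unfolding \<delta>_def using e Mx0 by simp
  define Gk where "Gk k = {y. real k * c < g y}" for k :: nat
  have gc: "continuous_on UNIV g" unfolding g_def by (intro continuous_intros fc)
  have Gk_open: "\<And>k. open (Gk k)" unfolding Gk_def by (intro open_Collect_less continuous_intros gc)
  interpret P: prob_space p using probsD p by blast
  have "\<forall>k. \<exists>hr. fst hr \<in> GG \<and> fst hr \<subseteq> Gk k \<and> measure p (Gk k) - \<delta> < of_rat (snd hr) \<and> of_rat (snd hr) < measure p (fst hr)"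
  proof
    fix k
    obtain H where H: "H \<in> GG" "H \<subseteq> Gk k" "measure p (Gk k) - \<delta> < measure p H"
      using G_approx[OF Gk_open P.finite_measure_axioms probsD(2)[OF p] \<delta>0] by blast
    obtain r where r: "r \<in> \<rat>" "measure p (Gk k) - \<delta> < r" "r < measure p H"
      using Rats_dense_in_real[OF H(3)] by blast
    obtain r' where "r = of_rat r'" using r(1) Rats_cases by blast
    then show "\<exists>hr. fst hr \<in> GG \<and> fst hr \<subseteq> Gk k \<and> measure p (Gk k) - \<delta> < of_rat (snd hr) \<and> of_rat (snd hr) < measure p (fst hr)"
      using H r by (intro exI[of _ "(H, r')"]) auto
  qed
  then obtain hr where hr: "\<And>k. fst (hr k) \<in> GG \<and> fst (hr k) \<subseteq> Gk k \<and> measure p (Gk k) - \<delta> < of_rat (snd (hr k)) \<and> of_rat (snd (hr k)) < measure p (fst (hr k))"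
    by metis
  define S where "S = hr ` {1..N}"
  have "finite S" unfolding S_def by simp
  moreover have "S \<subseteq> GG \<times> UNIV" unfolding S_def image_subset_iff mem_Times_iff using hr by simp
  moreover have "\<forall>(H,r)\<in>S. of_rat r < measure p H" unfolding S_def using hr by (simp add: case_prod_beta)
  moreover have "\<forall>q\<in>probs. (\<forall>(H,r)\<in>S. of_rat r < measure q H) \<longrightarrow> (\<integral>y. f y \<partial>p) - \<epsilon> < (\<integral>y. f y \<partial>q)"
  proof (intro ballI impI)
    fix q assume q: "q \<in> probs" and qS: "\<forall>(H,r)\<in>S. of_rat r < measure q H"
    interpret Q: prob_space q using probsD q by blast
    have qG: "measure p (Gk k) - \<delta> < measure q (Gk k)" if "k \<in> {1..N}" for k
    proof -
      have "hr k \<in> S" unfolding S_def using that by simp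
      then have "of_rat (snd (hr k)) < measure q (fst (hr k))" using qS by (auto simp: case_prod_beta)
      also have "\<dots> \<le> measure q (Gk k)"
        using hr[of k] Gk_open[of k] probsD(2)[OF q] by (intro Q.finite_measure_mono) auto
      finally show ?thesis using hr[of k] by linarith
    qed
    have intq: "integrable q f" by (rule probs_integrable[OF fc fb q])
    have intp: "integrable p f" by (rule probs_integrable[OF fc fb p])
    have ig: "(\<integral>y. g y \<partial>r) = (\<integral>y. f y \<partial>r) + K" if "r \<in> probs" "integrable r f" for r
    proof -
      interpret R: prob_space r using probsD that by blast
      show ?thesis unfolding g_def using that(2) by (simp add: R.prob_space)
    qed
    have int_ind: "integrable r (\<lambda>y. \<Sum>k\<in>A. c * indicator (Gk k) y)" if "r \<in> probs" for r A
    proof -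
      interpret R: prob_space r using probsD that by blast
      show ?thesis
        using Gk_open probsD(2)[OF that]
        by (intro Bochner_Integration.integrable_sum[where f="\<lambda>k y. c * indicator (Gk k) y"] integrable_mult_right integrable_real_indicator) (auto simp: R.emeasure_eq_measure)
    qed
    have intg: "integrable r g" if "r \<in> probs" for r
      unfolding g_def using probs_integrable[OF fc fb that] that probsD[OF that] by (simp add: prob_space.finite_measure finite_measure.integrable_const)
    have "(\<Sum>k\<in>{1..N}. c * measure q (Gk k)) \<le> (\<integral>y. g y \<partial>q)"
    proof -
      have "(\<Sum>k\<in>{1..N}. c * measure q (Gk k)) = (\<integral>y. (\<Sum>k\<in>{1..N}. c * indicator (Gk k) y) \<partial>q)"
        using integral_sum_ind[OF q, of "{1..N}" Gk c] Gk_open by simp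
      also have "\<dots> \<le> (\<integral>y. g y \<partial>q)"
        using pointwise_lower[of g _ c N, OF g0 c0] unfolding Gk_def
        by (intro integral_mono int_ind[OF q, unfolded Gk_def] intg[OF q]) auto
      finally show ?thesis .
    qed
    moreover have "(\<Sum>k\<in>{1..N}. c * (measure p (Gk k) - \<delta>)) < (\<Sum>k\<in>{1..N}. c * measure q (Gk k))"
      using N0 qG c0 by (intro sum_strict_mono) auto
    moreover have "(\<Sum>k\<in>{1..N}. c * (measure p (Gk k) - \<delta>)) = (\<Sum>k\<in>{1..N}. c * measure p (Gk k)) - \<epsilon> / 2"
    proof -
      have "(\<Sum>k\<in>{1..N}. c * (measure p (Gk k) - \<delta>)) = (\<Sum>k\<in>{1..N}. c * measure p (Gk k)) - real N * c * \<delta>"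
        by (simp add: right_diff_distrib sum_subtractf)
      also have "real N * c * \<delta> = \<epsilon> / 2" unfolding Nc \<delta>_def using Mx0 by simp
      finally show ?thesis .
    qed
    moreover have "(\<integral>y. g y \<partial>p) \<le> c + (\<Sum>k\<in>{1..N}. c * measure p (Gk k))"
    proof -
      have "(\<integral>y. g y \<partial>p) \<le> (\<integral>y. (\<Sum>k\<in>{0..<N}. c * indicator (Gk k) y) \<partial>p)"
        using pointwise_upper[of g _ N c] gM c0 Nc unfolding Gk_def
        by (intro integral_mono int_ind[OF p, unfolded Gk_def] intg[OF p]) auto
      also have "\<dots> = (\<Sum>k\<in>{0..<N}. c * measure p (Gk k))"
        using integral_sum_ind[OF p, of "{0..<N}" Gk c] Gk_open by simp
      also have "\<dots> = c * measure p (Gk 0) + (\<Sum>k\<in>{1..<N}. c * measure p (Gk k))"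
        using N0 by (simp add: sum.atLeast_Suc_lessThan)
      also have "\<dots> \<le> c + (\<Sum>k\<in>{1..<N}. c * measure p (Gk k))"
        using c0 P.prob_le_1 by (simp add: mult_left_le)
      also have "(\<Sum>k\<in>{1..<N}. c * measure p (Gk k)) \<le> (\<Sum>k\<in>{1..N}. c * measure p (Gk k))"
        using c0 by (intro sum_mono2) auto
      finally show ?thesis by simp
    qed
    ultimately have "(\<integral>y. g y \<partial>p) - \<epsilon> < (\<integral>y. g y \<partial>q)" using ce by linarith
    then show "(\<integral>y. f y \<partial>p) - \<epsilon> < (\<integral>y. f y \<partial>q)" using ig[OF p intp] ig[OF q intq] by simp
  qed
  ultimately show ?thesis by blast
qed

definition nbhd :: "('b::topological_space set \<times> rat) set \<Rightarrow> 'b measure set" where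
  "nbhd S = {q\<in>probs. \<forall>(H,r)\<in>S. of_rat r < measure q H}"

lemma nbhd_Un: "nbhd (S1 \<union> S2) = nbhd S1 \<inter> nbhd S2"
  unfolding nbhd_def by auto

lemma bounded_range_uminus:
  fixes f :: "'b \<Rightarrow> real"
  assumes "bounded (range f)" shows "bounded (range (\<lambda>y. - f y))"
proof -
  obtain B where B: "\<forall>x\<in>range f. norm x \<le> B" using assms unfolding bounded_iff by blast
  show ?thesis unfolding bounded_iff
  proof (intro exI[of _ B] ballI)
    fix x assume "x \<in> range (\<lambda>y. - f y)"
    then obtain y where "x = - f y" by auto
    moreover have "norm (f y) \<le> B" using B by auto
    ultimately show "norm x \<le> B" by simp
  qed
qed

lemma basis_nbhd:
  fixes f :: "'b::second_countable_topology \<Rightarrow> real"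
  assumes fc: "continuous_on UNIV f" and fb: "bounded (range f)" and U: "open U"
    and p: "p \<in> probs" "(\<integral>y. f y \<partial>p) \<in> U"
  shows "\<exists>S. finite S \<and> S \<subseteq> GG \<times> UNIV \<and> p \<in> nbhd S \<and> nbhd S \<subseteq> {q\<in>probs. (\<integral>y. f y \<partial>q) \<in> U}"
proof -
  obtain e where e: "e > 0" "ball (\<integral>y. f y \<partial>p) e \<subseteq> U"
    using U p(2) open_contains_ball by blast
  obtain S1 where S1: "finite S1" "S1 \<subseteq> GG \<times> UNIV" "\<forall>(H,r)\<in>S1. of_rat r < measure p H"
     "\<forall>q\<in>probs. (\<forall>(H,r)\<in>S1. of_rat r < measure q H) \<longrightarrow> (\<integral>y. f y \<partial>p) - e < (\<integral>y. f y \<partial>q)"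
    using key_lower[OF fc fb p(1) e(1)] by blast
  have fc': "continuous_on UNIV (\<lambda>y. - f y)" by (intro continuous_intros fc)
  obtain S2 where S2: "finite S2" "S2 \<subseteq> GG \<times> UNIV" "\<forall>(H,r)\<in>S2. of_rat r < measure p H"
     "\<forall>q\<in>probs. (\<forall>(H,r)\<in>S2. of_rat r < measure q H) \<longrightarrow> (\<integral>y. - f y \<partial>p) - e < (\<integral>y. - f y \<partial>q)"
    using key_lower[OF fc' bounded_range_uminus[OF fb] p(1) e(1)] by blast
  show ?thesis
  proof (intro exI[of _ "S1 \<union> S2"] conjI)
    show "finite (S1 \<union> S2)" "S1 \<union> S2 \<subseteq> GG \<times> UNIV" using S1 S2 by auto
    show "p \<in> nbhd (S1 \<union> S2)" unfolding nbhd_def using S1(3) S2(3) p(1) by blast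
    show "nbhd (S1 \<union> S2) \<subseteq> {q \<in> probs. (\<integral>y. f y \<partial>q) \<in> U}"
    proof
      fix q assume q: "q \<in> nbhd (S1 \<union> S2)"
      then have qp: "q \<in> probs" unfolding nbhd_def by auto
      have "(\<integral>y. f y \<partial>p) - e < (\<integral>y. f y \<partial>q)" using S1(4) q qp unfolding nbhd_def by blast
      moreover have "(\<integral>y. - f y \<partial>p) - e < (\<integral>y. - f y \<partial>q)" using S2(4) q qp unfolding nbhd_def by blast
      ultimately have "dist (\<integral>y. f y \<partial>p) (\<integral>y. f y \<partial>q) < e" by (simp add: dist_real_def abs_if)
      then show "q \<in> {q \<in> probs. (\<integral>y. f y \<partial>q) \<in> U}" using e(2) qp by auto
    qed
  qed
qed

lemma open_nbhd:
  fixes T :: "'b::second_countable_topology measure set"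
  assumes "openin weak_topology T"
  shows "\<forall>p\<in>T. \<exists>S. finite S \<and> S \<subseteq> GG \<times> UNIV \<and> p \<in> nbhd S \<and> nbhd S \<subseteq> T"
proof -
  have "generate_topology_on (insert probs
       {{p \<in> probs. (\<integral>y. f y \<partial>p) \<in> U} | f U.
          continuous_on UNIV (f :: 'b \<Rightarrow> real) \<and> bounded (range f) \<and> open U}) T"
    using assms unfolding weak_topology_def openin_topology_generated_by_iff .
  then show ?thesis
  proof induct
    case Empty
    then show ?case by simp
  next
    case (Int a b)
    show ?case
    proof
      fix p assume "p \<in> a \<inter> b"
      then have pa: "p \<in> a" and pb: "p \<in> b" by auto
      obtain S1 where "finite S1 \<and> S1 \<subseteq> GG \<times> UNIV \<and> p \<in> nbhd S1 \<and> nbhd S1 \<subseteq> a"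
        using bspec[OF Int(2) pa] by (elim exE)
      moreover obtain S2 where "finite S2 \<and> S2 \<subseteq> GG \<times> UNIV \<and> p \<in> nbhd S2 \<and> nbhd S2 \<subseteq> b"
        using bspec[OF Int(4) pb] by (elim exE)
      ultimately
      show "\<exists>S. finite S \<and> S \<subseteq> GG \<times> UNIV \<and> p \<in> nbhd S \<and> nbhd S \<subseteq> a \<inter> b"
        by (intro exI[of _ "S1 \<union> S2"]) (auto simp: nbhd_Un)
    qed
  next
    case (UN K)
    show ?case
    proof
      fix p assume "p \<in> \<Union>K"
      then obtain k where "k \<in> K" "p \<in> k" by blast
      obtain S where "finite S \<and> S \<subseteq> GG \<times> UNIV \<and> p \<in> nbhd S \<and> nbhd S \<subseteq> k"
        using bspec[OF UN(2)[OF \<open>k \<in> K\<close>] \<open>p \<in> k\<close>] by (elim exE)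
      then show "\<exists>S. finite S \<and> S \<subseteq> GG \<times> UNIV \<and> p \<in> nbhd S \<and> nbhd S \<subseteq> \<Union>K"
        using \<open>k \<in> K\<close> by blast
    qed
  next
    case (Basis s)
    show ?case
    proof
      fix p assume ps: "p \<in> s"
      show "\<exists>S. finite S \<and> S \<subseteq> GG \<times> UNIV \<and> p \<in> nbhd S \<and> nbhd S \<subseteq> s"
      proof (cases "s = probs")
        case True
        then show ?thesis using ps by (intro exI[of _ "{}"]) (auto simp: nbhd_def)
      next
        case False
        from Basis False have "s \<in> {{p \<in> probs. (\<integral>y. f y \<partial>p) \<in> U} | f U.
          continuous_on UNIV (f :: 'b \<Rightarrow> real) \<and> bounded (range f) \<and> open U}" by simp
        then obtain f U where fU: "s = {p \<in> probs. (\<integral>y. f y \<partial>p) \<in> U}" "continuous_on UNIV (f :: 'b \<Rightarrow> real)"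
          "bounded (range f)" "open U"
          by (smt (verit) mem_Collect_eq)
        have "p \<in> probs" "(\<integral>y. f y \<partial>p) \<in> U" using ps fU(1) by auto
        from basis_nbhd[OF fU(2,3,4) this] obtain S where
          "finite S \<and> S \<subseteq> GG \<times> UNIV \<and> p \<in> nbhd S \<and> nbhd S \<subseteq> {q\<in>probs. (\<integral>y. f y \<partial>q) \<in> U}" by blast
        then show ?thesis unfolding fU(1) by blast
      qed
    qed
  qed
qed

lemma kernel_meas_PY:
  fixes \<kappa> :: "'c \<Rightarrow> 'b::second_countable_topology measure"
  assumes k1: "\<forall>\<omega>\<in>space F. \<kappa> \<omega> \<in> probs"
      and k2: "\<forall>B\<in>sets borel. (\<lambda>\<omega>. emeasure (\<kappa> \<omega>) B) \<in> borel_measurable F"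
  shows "\<kappa> \<in> measurable F PY"
  unfolding PY_def
proof (rule measurable_measure_of)
  show "{S. openin weak_topology S} \<subseteq> Pow probs" by (auto dest: openin_weak_sub)
  show "\<kappa> \<in> space F \<rightarrow> probs" using k1 by auto
  fix T assume "T \<in> {S. openin weak_topology (S :: 'b measure set)}"
  then have T: "openin weak_topology T" by simp
  define I where "I = {S. finite S \<and> S \<subseteq> GG \<times> UNIV \<and> nbhd S \<subseteq> T}"
  have cI: "countable I"
  proof -
    have "countable (GG \<times> (UNIV :: rat set))" using countable_GG by (intro countable_SIGMA) auto
    then have "countable {S. finite S \<and> S \<subseteq> GG \<times> (UNIV :: rat set)}" by (rule countable_Collect_finite_subset)
    then show ?thesis unfolding I_def by (rule countable_subset[rotated]) auto
  qed
  have eq: "\<kappa> -` T \<inter> space F = {\<omega>\<in>space F. \<exists>S\<in>I. \<forall>(H,r)\<in>S. of_rat r < measure (\<kappa> \<omega>) H}"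
  proof (intro equalityI subsetI)
    fix \<omega> assume "\<omega> \<in> \<kappa> -` T \<inter> space F"
    then have w: "\<kappa> \<omega> \<in> T" "\<omega> \<in> space F" by auto
    obtain S where S: "finite S \<and> S \<subseteq> GG \<times> UNIV \<and> \<kappa> \<omega> \<in> nbhd S \<and> nbhd S \<subseteq> T"
      using bspec[OF open_nbhd[OF T] w(1)] by (elim exE)
    then have SI: "S \<in> I" unfolding I_def by simp
    have "\<kappa> \<omega> \<in> nbhd S" using S by blast
    then have "\<kappa> \<omega> \<in> probs \<and> (\<forall>(H,r)\<in>S. of_rat r < measure (\<kappa> \<omega>) H)" unfolding nbhd_def by (rule CollectD)
    then have "\<forall>(H,r)\<in>S. of_rat r < measure (\<kappa> \<omega>) H" by (rule conjunct2)
    then show "\<omega> \<in> {\<omega>\<in>space F. \<exists>S\<in>I. \<forall>(H,r)\<in>S. of_rat r < measure (\<kappa> \<omega>) H}"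
      using SI w(2) by blast
  next
    fix \<omega> assume "\<omega> \<in> {\<omega>\<in>space F. \<exists>S\<in>I. \<forall>(H,r)\<in>S. of_rat r < measure (\<kappa> \<omega>) H}"
    then obtain S where w: "\<omega> \<in> space F" "S \<in> I" "\<forall>(H,r)\<in>S. of_rat r < measure (\<kappa> \<omega>) H" by blast
    then have "\<kappa> \<omega> \<in> nbhd S" unfolding nbhd_def using k1 by blast
    moreover have "nbhd S \<subseteq> T" using w(2) unfolding I_def by blast
    ultimately have "\<kappa> \<omega> \<in> T" by blast
    then show "\<omega> \<in> \<kappa> -` T \<inter> space F" using w(1) by simp
  qed
  have mH: "(\<lambda>\<omega>. measure (\<kappa> \<omega>) H) \<in> borel_measurable F" if "H \<in> GG" for H
  proof -
    have "H \<in> sets borel" using GG_open[OF that] by simp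
    then have "(\<lambda>\<omega>. emeasure (\<kappa> \<omega>) H) \<in> borel_measurable F" using k2 by blast
    then have "(\<lambda>\<omega>. enn2real (emeasure (\<kappa> \<omega>) H)) \<in> borel_measurable F" by (rule borel_measurable_enn2real)
    then show ?thesis by (simp add: measure_def)
  qed
  show "\<kappa> -` T \<inter> space F \<in> sets F"
    unfolding eq
  proof (rule sets.sets_Collect_countable_Ex'[OF _ cI])
    fix S assume "S \<in> I"
    then have S: "finite S" "S \<subseteq> GG \<times> UNIV" unfolding I_def by auto
    have "{\<omega> \<in> space F. \<forall>z\<in>S. of_rat (snd z) < measure (\<kappa> \<omega>) (fst z)} \<in> sets F"
    proof (rule sets.sets_Collect_finite_All[OF _ S(1)])
      fix z assume "z \<in> S"
      then have "fst z \<in> GG" using S(2) by auto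
      then have mz: "(\<lambda>\<omega>. measure (\<kappa> \<omega>) (fst z)) \<in> borel_measurable F" by (rule mH)
      have "{\<omega> \<in> space F. of_rat (snd z) < measure (\<kappa> \<omega>) (fst z)} = (\<lambda>\<omega>. measure (\<kappa> \<omega>) (fst z)) -` {of_rat (snd z)<..} \<inter> space F"
        by auto
      also have "\<dots> \<in> sets F" by (rule measurable_sets[OF mz]) simp
      finally show "{\<omega> \<in> space F. of_rat (snd z) < measure (\<kappa> \<omega>) (fst z)} \<in> sets F" .
    qed
    then show "{\<omega> \<in> space F. \<forall>(H,r)\<in>S. of_rat r < measure (\<kappa> \<omega>) H} \<in> sets F"
      by (simp add: case_prod_beta)
  qed
qed

definition EE :: "'b::second_countable_topology set set" where
  "EE = {\<Inter>F | F. finite F \<and> F \<subseteq> BB}"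

lemma countable_EE: "countable (EE :: 'b::second_countable_topology set set)"
proof -
  have "(EE :: 'b set set) = Inter ` {F. finite F \<and> F \<subseteq> BB}" unfolding EE_def by auto
  moreover have "countable (Inter ` {F. finite F \<and> F \<subseteq> (BB :: 'b set set)})"
    by (rule countable_image[OF countable_Collect_finite_subset[OF BB(1)]])
  ultimately show ?thesis by simp
qed

lemma EE_Int_stable: "Int_stable EE"
  unfolding Int_stable_def EE_def
proof safe
  fix F1 F2 :: "'a set set" assume "finite F1" "F1 \<subseteq> BB" "finite F2" "F2 \<subseteq> BB"
  then show "\<exists>F. \<Inter>F1 \<inter> \<Inter>F2 = \<Inter>F \<and> finite F \<and> F \<subseteq> BB"
    by (intro exI[of _ "F1 \<union> F2"]) auto
qed

lemma UNIV_EE: "UNIV \<in> EE"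
  unfolding EE_def by (intro CollectI exI[of _ "{}"]) auto

lemma sets_borel_EE: "sets (borel :: 'b::second_countable_topology measure) = sigma_sets UNIV EE"
proof -
  have b: "sets (borel :: 'b measure) = sigma_sets UNIV BB"
    using borel_eq_countable_basis[OF BB] by (metis sets_measure_of top_greatest Pow_UNIV)
  have "BB \<subseteq> (EE :: 'b set set)" unfolding EE_def by (auto intro!: exI[of _ "{_}"])
  then have "sigma_sets UNIV BB \<subseteq> sigma_sets UNIV (EE :: 'b set set)" by (rule sigma_sets_mono')
  moreover have "sigma_sets UNIV (EE :: 'b set set) \<subseteq> sets borel"
  proof -
    have "EE \<subseteq> sets (borel :: 'b measure)"
    proof
      fix E :: "'b set" assume "E \<in> EE"
      then obtain F where F: "E = \<Inter>F" "finite F" "F \<subseteq> BB" unfolding EE_def by auto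
      have "open E" unfolding F(1) using F(2,3) BB(2) topological_basis_open by (intro open_Inter) auto
      then show "E \<in> sets borel" by simp
    qed
    then show ?thesis using sets.sigma_sets_subset[of EE borel] by simp
  qed
  ultimately show ?thesis using b by auto
qed

lemma probs_eq_EE:
  fixes p q :: "'b::second_countable_topology measure"
  assumes "p \<in> probs" "q \<in> probs" "\<forall>E\<in>EE. emeasure p E = emeasure q E"
  shows "p = q"
proof (rule measure_eqI_generator_eq[where E=EE and \<Omega>=UNIV and A="\<lambda>_. UNIV"])
  show "Int_stable EE" by (rule EE_Int_stable)
  show "EE \<subseteq> Pow UNIV" by simp
  show "\<And>X. X \<in> EE \<Longrightarrow> emeasure p X = emeasure q X" using assms(3) by simp
  show "sets p = sigma_sets UNIV EE" using probsD(2)[OF assms(1)] sets_borel_EE by simp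
  show "sets q = sigma_sets UNIV EE" using probsD(2)[OF assms(2)] sets_borel_EE by simp
  show "range (\<lambda>_. UNIV) \<subseteq> EE" using UNIV_EE by auto
  show "(\<Union>i. UNIV) = UNIV" by simp
  show "\<And>i. emeasure p UNIV \<noteq> \<infinity>" using probsD(1)[OF assms(1)]
    by (simp add: prob_space_def finite_measure.emeasure_finite)
qed

lemma cond_law_AE_eq:
  assumes M: "prob_space M" and sub: "subalgebra M F1"
    and k: "is_cond_law M F1 Y \<kappa>" and k': "is_cond_law M F1 Y \<kappa>'"
  shows "AE \<omega> in M. \<kappa> \<omega> = (\<kappa>' \<omega> :: 'b::second_countable_topology measure)"
proof -
  define R where "R = restr_to_subalg M F1"
  interpret R: finite_measure R unfolding R_def
    using finite_measure_restr_to_subalg[OF sub] M by (simp add: prob_space_def)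
  have sR: "sets R = sets F1" unfolding R_def by (rule sets_restr_to_subalg[OF sub])
  have AEB: "AE \<omega> in M. emeasure (\<kappa> \<omega>) B = emeasure (\<kappa>' \<omega>) B" if B: "B \<in> sets borel" for B
  proof -
    have m1: "(\<lambda>\<omega>. emeasure (\<kappa> \<omega>) B) \<in> borel_measurable F1" using k B unfolding is_cond_law_def by blast
    have m2: "(\<lambda>\<omega>. emeasure (\<kappa>' \<omega>) B) \<in> borel_measurable F1" using k' B unfolding is_cond_law_def by blast
    have "AE \<omega> in R. emeasure (\<kappa> \<omega>) B = emeasure (\<kappa>' \<omega>) B"
    proof (rule R.density_unique_finite_measure)
      show "(\<lambda>\<omega>. emeasure (\<kappa> \<omega>) B) \<in> borel_measurable R" using m1 sR by (simp cong: measurable_cong_sets)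
      show "(\<lambda>\<omega>. emeasure (\<kappa>' \<omega>) B) \<in> borel_measurable R" using m2 sR by (simp cong: measurable_cong_sets)
      show "AE x in R. 0 \<le> emeasure (\<kappa> x) B" "AE x in R. 0 \<le> emeasure (\<kappa>' x) B" by auto
      fix A assume "A \<in> sets R"
      then have A[measurable]: "A \<in> sets F1" using sR by simp
      note [measurable] = m1 m2
      have "(\<integral>\<^sup>+x. emeasure (\<kappa> x) B * indicator A x \<partial>R) = (\<integral>\<^sup>+x. emeasure (\<kappa> x) B * indicator A x \<partial>M)"
        unfolding R_def by (intro nn_integral_subalgebra2[OF sub]) measurable
      also have "\<dots> = emeasure M (A \<inter> Y -` B \<inter> space M)"
        using k A B unfolding is_cond_law_def by simp
      also have "\<dots> = (\<integral>\<^sup>+x. emeasure (\<kappa>' x) B * indicator A x \<partial>M)"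
        using k' A B unfolding is_cond_law_def by simp
      also have "\<dots> = (\<integral>\<^sup>+x. emeasure (\<kappa>' x) B * indicator A x \<partial>R)"
        unfolding R_def by (intro nn_integral_subalgebra2[OF sub, symmetric]) measurable
      finally show "(\<integral>\<^sup>+x. emeasure (\<kappa> x) B * indicator A x \<partial>R) = (\<integral>\<^sup>+x. emeasure (\<kappa>' x) B * indicator A x \<partial>R)" .
    qed
    then show ?thesis unfolding R_def by (rule AE_restr_to_subalg[OF sub])
  qed
  have "AE \<omega> in M. \<forall>E\<in>EE. emeasure (\<kappa> \<omega>) E = emeasure (\<kappa>' \<omega>) E"
  proof (rule AE_ball_countable'[OF _ countable_EE])
    fix E :: "'b set" assume "E \<in> EE"
    then have "E \<in> sets borel" using sets_borel_EE sigma_sets.Basic by blast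
    then show "AE \<omega> in M. emeasure (\<kappa> \<omega>) E = emeasure (\<kappa>' \<omega>) E" by (rule AEB)
  qed
  then show ?thesis
  proof (rule AE_mp[OF _ AE_I2])
    fix \<omega> assume "\<omega> \<in> space M"
    then have "\<kappa> \<omega> \<in> probs" "\<kappa>' \<omega> \<in> probs" using k k' unfolding is_cond_law_def by auto
    then show "(\<forall>E\<in>EE. emeasure (\<kappa> \<omega>) E = emeasure (\<kappa>' \<omega>) E) \<longrightarrow> \<kappa> \<omega> = \<kappa>' \<omega>"
      using probs_eq_EE by blast
  qed
qed

lemma finite_measure_eq_bcont:
  fixes M N :: "'z::metric_space measure"
  assumes fM: "finite_measure M" and fN: "finite_measure N" and sM: "sets M = sets borel" and sN: "sets N = sets borel"
    and eq: "\<And>f :: 'z \<Rightarrow> real. continuous_on UNIV f \<Longrightarrow> bounded (range f) \<Longrightarrow> (\<integral>z. f z \<partial>M) = (\<integral>z. f z \<partial>N)"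
  shows "M = N"
proof (rule measure_eqI_generator_eq[where E="Collect closed" and \<Omega>=UNIV and A="\<lambda>_. UNIV"])
  show "Int_stable (Collect closed)" by (auto simp: Int_stable_def)
  show "Collect closed \<subseteq> Pow UNIV" by simp
  have sb: "sets (borel :: 'z measure) = sigma_sets UNIV (Collect closed)"
    by (metis borel_eq_closed sets_measure_of top_greatest Pow_UNIV)
  show "sets M = sigma_sets UNIV (Collect closed)" using sM sb by simp
  show "sets N = sigma_sets UNIV (Collect closed)" using sN sb by simp
  show "range (\<lambda>_. UNIV) \<subseteq> Collect closed" by auto
  show "(\<Union>i. UNIV) = UNIV" by simp
  show "\<And>i. emeasure M UNIV \<noteq> \<infinity>" using fM by (simp add: finite_measure.emeasure_finite)
  fix C :: "'z set" assume "C \<in> Collect closed"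
  then have C: "closed C" by simp
  show "emeasure M C = emeasure N C"
  proof (cases "C = {}")
    case True then show ?thesis by simp
  next
    case False
    have l1: "(\<lambda>n. \<integral>z. cfun C n z \<partial>M) \<longlonglongrightarrow> measure M C" by (rule cfun_integral_lim[OF C False fM sM])
    have l2: "(\<lambda>n. \<integral>z. cfun C n z \<partial>M) \<longlonglongrightarrow> measure N C"
      using cfun_integral_lim[OF C False fN sN] eq[OF cfun_cont cfun_bounded] by simp
    have "measure M C = measure N C" using LIMSEQ_unique[OF l1 l2] .
    then show ?thesis using fM fN by (simp add: finite_measure.emeasure_eq_measure)
  qed
qed

lemma integral_measurable_subprob_algebra2':
  fixes f :: "_ \<Rightarrow> _ \<Rightarrow> real"
  assumes f[measurable]: "(\<lambda>(x, y). f x y) \<in> borel_measurable (M \<Otimes>\<^sub>M N)"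
  assumes L[measurable]: "L \<in> measurable M (subprob_algebra N)"
  shows "(\<lambda>x. integral\<^sup>L (L x) (f x)) \<in> borel_measurable M"
proof -
  note integral_measurable_subprob_algebra[measurable]
  note measurable_distr2[measurable]
  have "(\<lambda>x. integral\<^sup>L (distr (L x) (M \<Otimes>\<^sub>M N) (\<lambda>y. (x, y))) (\<lambda>(x, y). f x y)) \<in> borel_measurable M"
    by measurable
  then show "(\<lambda>x. integral\<^sup>L (L x) (f x)) \<in> borel_measurable M"
    by (rule measurable_cong[THEN iffD1, rotated])
       (simp add: integral_distr)
qed

lemma snd_subprob: "snd \<in> measurable (XPY :: ('a::topological_space \<times> 'b::metric_space measure) measure) (subprob_algebra borel)"
  unfolding XPY_def by (rule measurable_compose[OF measurable_snd PY_subprob])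

lemma XPY_integral_meas:
  fixes g :: "'a::topological_space \<times> 'b::metric_space \<Rightarrow> real"
  assumes g[measurable]: "g \<in> borel_measurable (borel \<Otimes>\<^sub>M borel)"
  shows "(\<lambda>xp. \<integral>y. g (fst xp, y) \<partial>snd xp) \<in> borel_measurable (XPY :: ('a \<times> 'b measure) measure)"
proof -
  have "(\<lambda>(xp, y). g (fst xp, y)) \<in> borel_measurable ((XPY :: ('a \<times> 'b measure) measure) \<Otimes>\<^sub>M borel)"
    unfolding XPY_def by measurable
  from integral_measurable_subprob_algebra2'[OF this snd_subprob] show ?thesis by simp
qed

lemma prob_integral_shift:
  fixes f :: "'z \<Rightarrow> real"
  assumes Q: "prob_space Q" and f: "f \<in> borel_measurable Q" and B: "\<And>x. x \<in> space Q \<Longrightarrow> \<bar>f x\<bar> \<le> B"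
  shows "(\<integral>\<^sup>+x. ennreal (f x + B) \<partial>Q) = ennreal ((\<integral>x. f x \<partial>Q) + B)"
proof -
  interpret prob_space Q by fact
  have i: "integrable Q f" using B f by (intro integrable_const_bound[where B=B]) auto
  have "(\<integral>\<^sup>+x. ennreal (f x + B) \<partial>Q) = ennreal (\<integral>x. f x + B \<partial>Q)"
  proof (rule nn_integral_eq_integral)
    show "integrable Q (\<lambda>x. f x + B)" using i by simp
    show "AE x in Q. 0 \<le> f x + B"
    proof (rule AE_I2)
      fix x assume "x \<in> space Q" then have "\<bar>f x\<bar> \<le> B" by (rule B)
      then show "0 \<le> f x + B" by linarith
    qed
  qed
  also have "(\<integral>x. f x + B \<partial>Q) = (\<integral>x. f x \<partial>Q) + B" using i by (simp add: prob_space)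
  finally show ?thesis .
qed

lemma abs_integral_prob_le:
  fixes f :: "'z \<Rightarrow> real"
  assumes Q: "prob_space Q" and f: "f \<in> borel_measurable Q" and B: "\<And>x. x \<in> space Q \<Longrightarrow> \<bar>f x\<bar> \<le> B"
  shows "\<bar>\<integral>x. f x \<partial>Q\<bar> \<le> B"
proof -
  interpret prob_space Q by fact
  obtain x0 where "x0 \<in> space Q" using not_empty by blast
  have B0: "0 \<le> B" using B[OF \<open>x0 \<in> space Q\<close>] by linarith
  have "\<bar>\<integral>x. f x \<partial>Q\<bar> \<le> (\<integral>x. \<bar>f x\<bar> \<partial>Q)" by (rule integral_abs_bound)
  also have "\<dots> \<le> (\<integral>x. B \<partial>Q)"
    using B B0 f by (intro integral_mono integrable_const_bound[where B=B]) auto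
  also have "\<dots> = B" by (simp add: prob_space)
  finally show ?thesis .
qed

lemma integral_bind_bounded:
  fixes f :: "'z \<Rightarrow> real"
  assumes K: "K \<in> measurable M (subprob_algebra N)" and f: "f \<in> borel_measurable N"
    and B: "\<And>x. \<bar>f x\<bar> \<le> B" and M: "prob_space M" and Kp: "\<And>x. x \<in> space M \<Longrightarrow> prob_space (K x)"
  shows "(\<integral>x. f x \<partial>(M \<bind> K)) = (\<integral>x. (\<integral>y. f y \<partial>K x) \<partial>M)"
proof -
  interpret M: prob_space M by fact
  have ne: "space M \<noteq> {}" by (rule M.not_empty)
  have sb: "sets (M \<bind> K) = sets N" by (rule sets_bind_measurable[OF K ne])
  have pb: "prob_space (M \<bind> K)" using Kp K by (intro M.prob_space_bind) auto
  have sK: "\<And>x. x \<in> space M \<Longrightarrow> sets (K x) = sets N" using K by (rule sets_kernel)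
  have mI: "(\<lambda>x. \<integral>y. f y \<partial>K x) \<in> borel_measurable M"
    by (rule measurable_compose[OF K integral_measurable_subprob_algebra[OF f]])
  have bI: "\<bar>\<integral>y. f y \<partial>K x\<bar> \<le> B" if "x \<in> space M" for x
    using abs_integral_prob_le[OF Kp[OF that] _ B] f sK[OF that] by (simp cong: measurable_cong_sets)
  have "ennreal ((\<integral>x. f x \<partial>(M \<bind> K)) + B) = (\<integral>\<^sup>+x. ennreal (f x + B) \<partial>(M \<bind> K))"
    using prob_integral_shift[OF pb _ B] f sb by (simp cong: measurable_cong_sets)
  also have "\<dots> = (\<integral>\<^sup>+x. (\<integral>\<^sup>+y. ennreal (f y + B) \<partial>K x) \<partial>M)"
    using f by (intro nn_integral_bind[OF _ K]) (intro measurable_compose[OF _ measurable_ennreal] borel_measurable_add borel_measurable_const)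
  also have "\<dots> = (\<integral>\<^sup>+x. ennreal ((\<integral>y. f y \<partial>K x) + B) \<partial>M)"
  proof (intro nn_integral_cong)
    fix x assume x: "x \<in> space M"
    show "(\<integral>\<^sup>+y. ennreal (f y + B) \<partial>K x) = ennreal ((\<integral>y. f y \<partial>K x) + B)"
      using prob_integral_shift[OF Kp[OF x] _ B] f sK[OF x] by (simp cong: measurable_cong_sets)
  qed
  also have "\<dots> = ennreal ((\<integral>x. (\<integral>y. f y \<partial>K x) \<partial>M) + B)"
  proof -
    have "\<bar>\<integral>y. f y \<partial>K x\<bar> \<le> B" if "x \<in> space M" for x using bI that .
    then show ?thesis using prob_integral_shift[OF M mI, of B] by simp
  qed
  finally have "ennreal ((\<integral>x. f x \<partial>(M \<bind> K)) + B) = ennreal ((\<integral>x. (\<integral>y. f y \<partial>K x) \<partial>M) + B)" .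
  moreover have "0 \<le> (\<integral>x. f x \<partial>(M \<bind> K)) + B"
  proof -
    have "f \<in> borel_measurable (M \<bind> K)" using f sb by (simp cong: measurable_cong_sets)
    from abs_integral_prob_le[OF pb this B] show ?thesis by linarith
  qed
  moreover have "0 \<le> (\<integral>x. (\<integral>y. f y \<partial>K x) \<partial>M) + B"
    using abs_integral_prob_le[OF M mI, of B] bI by auto
  ultimately show ?thesis by simp
qed

lemma ext_transfer:
  assumes F: "F \<in> borel_measurable N" and T: "T \<in> measurable M N"
    and ae: "AE \<omega> in M. G \<omega> = F (T \<omega>)"
  shows "ext_integrable M G = ext_integrable (distr M N T) F \<and> ext_integral M G = ext_integral (distr M N T) F"
proof -
  have m1: "(\<lambda>x. e2ennreal (F x)) \<in> borel_measurable (distr M N T)" using F by measurable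
  have m2: "(\<lambda>x. e2ennreal (- F x)) \<in> borel_measurable (distr M N T)" using F by measurable
  have e1: "(\<integral>\<^sup>+x. e2ennreal (G x) \<partial>M) = (\<integral>\<^sup>+x. e2ennreal (F x) \<partial>distr M N T)"
    unfolding nn_integral_distr[OF T m1] by (rule nn_integral_cong_AE) (use ae in auto)
  have e2: "(\<integral>\<^sup>+x. e2ennreal (- G x) \<partial>M) = (\<integral>\<^sup>+x. e2ennreal (- F x) \<partial>distr M N T)"
    unfolding nn_integral_distr[OF T m2] by (rule nn_integral_cong_AE) (use ae in auto)
  show ?thesis unfolding ext_integrable_def ext_integral_def e1 e2 by simp
qed

lemma sub_trans: "subalgebra M F2 \<Longrightarrow> subalgebra F2 F1 \<Longrightarrow> subalgebra M F1"
  unfolding subalgebra_def by auto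

lemma emeasure_distr_Pair:
  assumes "sets p = sets (borel :: 'b::topological_space measure)" "a \<in> sets (borel :: 'a::topological_space measure)" "b \<in> sets borel"
  shows "emeasure (distr p (borel \<Otimes>\<^sub>M borel) (\<lambda>y. (x :: 'a, y))) (a \<times> b) = indicator a x * emeasure p b"
proof -
  have m: "(\<lambda>y. (x, y)) \<in> measurable p (borel \<Otimes>\<^sub>M borel)"
    using assms(1) by (simp cong: measurable_cong_sets)
  have sp: "space p = UNIV" using assms(1) by (metis sets_eq_imp_space_eq space_borel)
  have "emeasure (distr p (borel \<Otimes>\<^sub>M borel) (\<lambda>y. (x, y))) (a \<times> b) = emeasure p ((\<lambda>y. (x, y)) -` (a \<times> b) \<inter> space p)"
    using assms by (intro emeasure_distr[OF m]) auto
  also have "(\<lambda>y. (x, y)) -` (a \<times> b) \<inter> space p = (if x \<in> a then b else {})" using sp by auto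
  finally show ?thesis by (simp add: indicator_def)
qed

lemma part1_lambda:
  fixes M :: "'c measure" and X :: "'c \<Rightarrow> 'a::polish_space" and Y :: "'c \<Rightarrow> 'b::polish_space"
  assumes proc: "one_step_process M F1 F2 X Y" and cl: "is_cond_law M F1 Y \<kappa>"
  shows "distr M XPY (\<lambda>\<omega>. (X \<omega>, \<kappa> \<omega>)) \<in> Lambda (distr M borel X) (distr M borel Y)"
proof -
  have Mp: "prob_space M" and sub2: "subalgebra M F2" and sub21: "subalgebra F2 F1"
    and XF1: "X \<in> borel_measurable F1" and YF2: "Y \<in> borel_measurable F2"
    using proc unfolding one_step_process_def by auto
  interpret M: prob_space M by (rule Mp)
  have sub: "subalgebra M F1" by (rule sub_trans[OF sub2 sub21])
  have spF1: "space F1 = space M" using sub unfolding subalgebra_def by simp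
  have X[measurable]: "X \<in> borel_measurable M" by (rule measurable_from_subalg[OF sub XF1])
  have Y[measurable]: "Y \<in> borel_measurable M" by (rule measurable_from_subalg[OF sub2 YF2])
  have cl1: "\<forall>\<omega>\<in>space F1. \<kappa> \<omega> \<in> probs" using cl spF1 unfolding is_cond_law_def by simp
  have cl2: "\<forall>B\<in>sets borel. (\<lambda>\<omega>. emeasure (\<kappa> \<omega>) B) \<in> borel_measurable F1"
    using cl unfolding is_cond_law_def by simp
  have kF1: "\<kappa> \<in> measurable F1 PY" by (rule kernel_meas_PY[OF cl1 cl2])
  have kM[measurable]: "\<kappa> \<in> measurable M PY" by (rule measurable_from_subalg[OF sub kF1])
  have kS[measurable]: "\<kappa> \<in> measurable M (subprob_algebra borel)" by (rule measurable_compose[OF kM PY_subprob])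
  define T where "T \<omega> = (X \<omega>, \<kappa> \<omega>)" for \<omega>
  have T[measurable]: "T \<in> measurable M XPY" unfolding T_def XPY_def by measurable
  define P where "P = distr M XPY T"
  have Pp: "prob_space P" unfolding P_def by (rule M.prob_space_distr[OF T])
  have sP: "sets P = sets XPY" unfolding P_def by simp
  define Kern where "Kern \<omega> = distr (\<kappa> \<omega>) (borel \<Otimes>\<^sub>M borel) (\<lambda>y. (X \<omega>, y))" for \<omega>
  have Kern[measurable]: "Kern \<in> measurable M (subprob_algebra (borel \<Otimes>\<^sub>M borel))"
    unfolding Kern_def by (rule measurable_distr2[OF _ kS]) measurable
  define Q where "Q = distr M (borel \<Otimes>\<^sub>M borel) (\<lambda>\<omega>. (X \<omega>, Y \<omega>))"
  have Qp: "prob_space Q" unfolding Q_def by (rule M.prob_space_distr) measurable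
  have sQ: "sets Q = sets (borel \<Otimes>\<^sub>M borel)" unfolding Q_def by simp
  have kp: "\<kappa> \<omega> \<in> probs" if "\<omega> \<in> space M" for \<omega> using cl1 spF1 that by simp
  have Kp: "prob_space (Kern \<omega>)" if "\<omega> \<in> space M" for \<omega>
    unfolding Kern_def using probsD[OF kp[OF that]]
    by (intro prob_space.prob_space_distr) (auto cong: measurable_cong_sets)
  have QK: "Q = M \<bind> Kern"
  proof (rule measure_eqI_generator_eq[where E="{a \<times> b | a b. a \<in> sets (borel :: 'a measure) \<and> b \<in> sets (borel :: 'b measure)}"
        and \<Omega>=UNIV and A="\<lambda>_. UNIV"])
    show "Int_stable {a \<times> b | a b. a \<in> sets (borel :: 'a measure) \<and> b \<in> sets (borel :: 'b measure)}"
      using Int_stable_pair_measure_generator[of borel borel] by simp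
    show "{a \<times> b | a b. a \<in> sets (borel :: 'a measure) \<and> b \<in> sets (borel :: 'b measure)} \<subseteq> Pow UNIV" by simp
    show "sets Q = sigma_sets UNIV {a \<times> b | a b. a \<in> sets (borel :: 'a measure) \<and> b \<in> sets (borel :: 'b measure)}"
      unfolding sQ sets_pair_measure by simp
    show "sets (M \<bind> Kern) = sigma_sets UNIV {a \<times> b | a b. a \<in> sets (borel :: 'a measure) \<and> b \<in> sets (borel :: 'b measure)}"
      unfolding sets_bind_measurable[OF Kern M.not_empty] sets_pair_measure by simp
    show "range (\<lambda>_. UNIV) \<subseteq> {a \<times> b | a b. a \<in> sets (borel :: 'a measure) \<and> b \<in> sets (borel :: 'b measure)}"
      by (auto intro!: exI[of _ UNIV])
    show "(\<Union>i. UNIV) = UNIV" by simp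
    show "\<And>i. emeasure Q UNIV \<noteq> \<infinity>" using Qp by (simp add: prob_space_def finite_measure.emeasure_finite)
    fix Z assume "Z \<in> {a \<times> b | a b. a \<in> sets (borel :: 'a measure) \<and> b \<in> sets (borel :: 'b measure)}"
    then obtain a b where Z: "Z = a \<times> b" "a \<in> sets (borel :: 'a measure)" "b \<in> sets (borel :: 'b measure)" by blast
    have XA: "X -` a \<inter> space M \<in> sets F1"
      using measurable_sets[OF XF1 Z(2)] spF1 by simp
    have "emeasure Q Z = emeasure M ((\<lambda>\<omega>. (X \<omega>, Y \<omega>)) -` (a \<times> b) \<inter> space M)"
      unfolding Q_def Z(1) using Z by (intro emeasure_distr) auto
    also have "(\<lambda>\<omega>. (X \<omega>, Y \<omega>)) -` (a \<times> b) \<inter> space M = (X -` a \<inter> space M) \<inter> Y -` b \<inter> space M" by auto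
    also have "emeasure M \<dots> = (\<integral>\<^sup>+\<omega>\<in>(X -` a \<inter> space M). emeasure (\<kappa> \<omega>) b \<partial>M)"
      using cl XA Z(3) unfolding is_cond_law_def by blast
    also have "\<dots> = (\<integral>\<^sup>+\<omega>. emeasure (Kern \<omega>) Z \<partial>M)"
    proof (rule nn_integral_cong)
      fix \<omega> assume w: "\<omega> \<in> space M"
      show "emeasure (\<kappa> \<omega>) b * indicator (X -` a \<inter> space M) \<omega> = emeasure (Kern \<omega>) Z"
        unfolding Kern_def Z(1) using emeasure_distr_Pair[OF probsD(2)[OF kp[OF w]] Z(2,3), of "X \<omega>"] w
        by (simp add: indicator_def)
    qed
    also have "\<dots> = emeasure (M \<bind> Kern) Z"
      using Z by (intro emeasure_bind[symmetric, OF M.not_empty Kern]) auto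
    finally show "emeasure Q Z = emeasure (M \<bind> Kern) Z" .
  qed
  have intens: "is_intensity P Q"
    unfolding is_intensity_def
  proof (intro conjI allI impI)
    show "prob_space Q" by (rule Qp)
    show "sets Q = sets (borel \<Otimes>\<^sub>M borel)" by (rule sQ)
    fix f :: "'a \<times> 'b \<Rightarrow> real" assume f: "continuous_on UNIV f \<and> bounded (range f)"
    have fm: "f \<in> borel_measurable (borel \<Otimes>\<^sub>M borel)"
      unfolding borel_prod using f by (intro borel_measurable_continuous_onI) simp
    obtain B where B: "\<forall>x\<in>range f. norm x \<le> B" using f unfolding bounded_iff by blast
    have Bf: "\<bar>f z\<bar> \<le> B" for z
    proof -
      have "norm (f z) \<le> B" using B by blast
      then show ?thesis by simp
    qed
    have "(\<integral>z. f z \<partial>Q) = (\<integral>\<omega>. (\<integral>z. f z \<partial>Kern \<omega>) \<partial>M)"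
      unfolding QK by (rule integral_bind_bounded[OF Kern fm Bf Mp Kp])
    also have "\<dots> = (\<integral>\<omega>. (\<integral>y. f (X \<omega>, y) \<partial>\<kappa> \<omega>) \<partial>M)"
    proof (rule Bochner_Integration.integral_cong[OF refl])
      fix \<omega> assume w: "\<omega> \<in> space M"
      have m: "(\<lambda>y. (X \<omega>, y)) \<in> measurable (\<kappa> \<omega>) (borel \<Otimes>\<^sub>M borel)"
        using probsD(2)[OF kp[OF w]] by (simp cong: measurable_cong_sets)
      show "(\<integral>z. f z \<partial>Kern \<omega>) = (\<integral>y. f (X \<omega>, y) \<partial>\<kappa> \<omega>)"
        unfolding Kern_def by (rule integral_distr[OF m fm])
    qed
    also have "\<dots> = (\<integral>xp. (\<integral>y. f (fst xp, y) \<partial>snd xp) \<partial>P)"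
      unfolding P_def using integral_distr[OF T XPY_integral_meas[OF fm]] by (simp add: T_def)
    finally show "(\<integral>z. f z \<partial>Q) = (\<integral>xp. (\<integral>y. f (fst xp, y) \<partial>snd xp) \<partial>P)" .
  qed
  have m1: "distr Q borel fst = distr M borel X"
    unfolding Q_def by (subst distr_distr) (auto simp: comp_def)
  have m2: "distr Q borel snd = distr M borel Y"
    unfolding Q_def by (subst distr_distr) (auto simp: comp_def)
  show ?thesis
    unfolding Lambda_def P_def[symmetric] T_def[symmetric]
    using Pp sP intens m1 m2 by blast
qed

lemma lambda_nonempty:
  fixes \<mu> :: "'a::polish_space measure" and \<nu> :: "'b::polish_space measure"
  assumes mu: "prob_space \<mu>" "sets \<mu> = sets borel" and nu: "prob_space \<nu>" "sets \<nu> = sets borel"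
  shows "distr \<mu> XPY (\<lambda>x. (x, \<nu>)) \<in> Lambda \<mu> \<nu>"
proof -
  interpret MU: prob_space \<mu> by (rule mu(1))
  interpret NU: prob_space \<nu> by (rule nu(1))
  interpret PS: pair_sigma_finite \<mu> \<nu> by unfold_locales
  have nuP: "\<nu> \<in> space PY" using nu by (simp add: probs_def)
  have T: "(\<lambda>x. (x, \<nu>)) \<in> measurable \<mu> XPY"
    unfolding XPY_def using mu(2) nuP by (intro measurable_Pair) (auto cong: measurable_cong_sets)
  define P where "P = distr \<mu> XPY (\<lambda>x. (x, \<nu>))"
  define Q where "Q = \<mu> \<Otimes>\<^sub>M \<nu>"
  have Qp: "prob_space Q" unfolding Q_def by (rule prob_space_pair[OF mu(1) nu(1)])
  have sQ: "sets Q = sets (borel \<Otimes>\<^sub>M borel)" unfolding Q_def using mu(2) nu(2) by (rule sets_pair_measure_cong)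
  have spmu: "space \<mu> = UNIV" using mu(2) by (metis sets_eq_imp_space_eq space_borel)
  have spnu: "space \<nu> = UNIV" using nu(2) by (metis sets_eq_imp_space_eq space_borel)
  have intens: "is_intensity P Q"
    unfolding is_intensity_def
  proof (intro conjI allI impI)
    show "prob_space Q" by (rule Qp)
    show "sets Q = sets (borel \<Otimes>\<^sub>M borel)" by (rule sQ)
    fix f :: "'a \<times> 'b \<Rightarrow> real" assume f: "continuous_on UNIV f \<and> bounded (range f)"
    have fm: "f \<in> borel_measurable (borel \<Otimes>\<^sub>M borel)"
      unfolding borel_prod using f by (intro borel_measurable_continuous_onI) simp
    obtain B where B: "\<forall>x\<in>range f. norm x \<le> B" using f unfolding bounded_iff by blast
    have Bf: "norm (f z) \<le> B" for z using B by blast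
    have fQ: "f \<in> borel_measurable Q" using fm sQ by (simp cong: measurable_cong_sets)
    have iQ: "integrable Q f"
    proof -
      interpret QP: prob_space Q by (rule Qp)
      show ?thesis using fQ Bf by (intro QP.integrable_const_bound[where B=B] AE_I2) auto
    qed
    have "(\<integral>z. f z \<partial>Q) = (\<integral>x. (\<integral>y. f (x, y) \<partial>\<nu>) \<partial>\<mu>)"
      unfolding Q_def using PS.integral_fst'[OF iQ[unfolded Q_def]] by simp
    also have "\<dots> = (\<integral>xp. (\<integral>y. f (fst xp, y) \<partial>snd xp) \<partial>P)"
      unfolding P_def using integral_distr[OF T XPY_integral_meas[OF fm]] by simp
    finally show "(\<integral>z. f z \<partial>Q) = (\<integral>xp. (\<integral>y. f (fst xp, y) \<partial>snd xp) \<partial>P)" .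
  qed
  have m1: "distr Q borel fst = \<mu>"
  proof (rule measure_eqI)
    show "sets (distr Q borel fst) = sets \<mu>" using mu(2) by simp
    fix A assume "A \<in> sets (distr Q borel fst)"
    then have A: "A \<in> sets borel" by simp
    have "emeasure (distr Q borel fst) A = emeasure Q (fst -` A \<inter> space Q)"
      using A sQ by (intro emeasure_distr) (auto cong: measurable_cong_sets)
    also have "fst -` A \<inter> space Q = A \<times> space \<nu>" unfolding Q_def space_pair_measure spmu spnu by auto
    also have "emeasure Q (A \<times> space \<nu>) = emeasure \<mu> A"
      unfolding Q_def using NU.emeasure_pair_measure_Times[where N=\<mu> and A=A and B="space \<nu>"] A mu(2) by (simp add: NU.emeasure_space_1)
    finally show "emeasure (distr Q borel fst) A = emeasure \<mu> A" .
  qed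
  have m2: "distr Q borel snd = \<nu>"
  proof (rule measure_eqI)
    show "sets (distr Q borel snd) = sets \<nu>" using nu(2) by simp
    fix A assume "A \<in> sets (distr Q borel snd)"
    then have A: "A \<in> sets borel" by simp
    have "emeasure (distr Q borel snd) A = emeasure Q (snd -` A \<inter> space Q)"
      using A sQ by (intro emeasure_distr) (auto cong: measurable_cong_sets)
    also have "snd -` A \<inter> space Q = space \<mu> \<times> A" unfolding Q_def space_pair_measure spmu spnu by auto
    also have "emeasure Q (space \<mu> \<times> A) = emeasure \<nu> A"
      unfolding Q_def using NU.emeasure_pair_measure_Times[where N=\<mu> and A="space \<mu>" and B=A] A nu(2) by (simp add: MU.emeasure_space_1)
    finally show "emeasure (distr Q borel snd) A = emeasure \<nu> A" .
  qed
  have Pp: "prob_space P" unfolding P_def by (rule MU.prob_space_distr[OF T])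
  show ?thesis unfolding Lambda_def P_def[symmetric] using Pp intens m1 m2 by (auto simp: P_def)
qed

lemma space_XPY: "space (XPY :: ('a::topological_space \<times> 'b::topological_space measure) measure) = UNIV \<times> probs"
  unfolding XPY_def by (simp add: space_pair_measure)

lemma probs_space: "p \<in> probs \<Longrightarrow> space p = UNIV"
  by (metis probsD(2) sets_eq_imp_space_eq space_borel)

locale part2 =
  fixes P :: "('a::polish_space \<times> 'b::polish_space measure) measure"
  assumes Pp: "prob_space P" and sP: "sets P = sets XPY"
begin

definition K2 where "K2 xp = distr (snd xp) (XPY \<Otimes>\<^sub>M borel) (\<lambda>y. (xp, y))"
definition K3 where "K3 xp = distr (snd xp) (borel \<Otimes>\<^sub>M borel) (\<lambda>y. (fst xp, y))"
definition MM where "MM = P \<bind> K2"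
definition RR where "RR = P \<bind> K3"

lemma spP: "space P = UNIV \<times> probs"
  using sets_eq_imp_space_eq[OF sP] space_XPY by simp

lemma neP: "space P \<noteq> {}" using Pp prob_space.not_empty by blast

lemma sndS: "snd \<in> measurable P (subprob_algebra borel)"
  using snd_subprob sP by (simp cong: measurable_cong_sets)

lemma K2m: "K2 \<in> measurable P (subprob_algebra (XPY \<Otimes>\<^sub>M borel))"
  unfolding K2_def
proof (rule measurable_distr2[OF _ sndS])
  have "sets (P \<Otimes>\<^sub>M borel) = sets (XPY \<Otimes>\<^sub>M borel)" using sP by (intro sets_pair_measure_cong) auto
  then show "(\<lambda>(x, y). (x, y)) \<in> measurable (P \<Otimes>\<^sub>M borel) (XPY \<Otimes>\<^sub>M borel)"
    unfolding case_prod_Pair id_def by (rule measurable_ident_sets)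
qed

lemma K3m: "K3 \<in> measurable P (subprob_algebra (borel \<Otimes>\<^sub>M borel))"
  unfolding K3_def
proof (rule measurable_distr2[OF _ sndS])
  have "fst \<in> measurable XPY borel" unfolding XPY_def by (rule measurable_fst)
  then have "fst \<in> measurable P borel" unfolding measurable_cong_sets[OF sP refl] .
  then have "(\<lambda>z. fst (fst z)) \<in> measurable (P \<Otimes>\<^sub>M borel) borel" by (rule measurable_compose[OF measurable_fst])
  then have "(\<lambda>z. (fst (fst z), snd z)) \<in> measurable (P \<Otimes>\<^sub>M borel) (borel \<Otimes>\<^sub>M borel)"
    by (rule measurable_Pair) (rule measurable_snd)
  then show "(\<lambda>(x, y). (fst x, y)) \<in> measurable (P \<Otimes>\<^sub>M borel) (borel \<Otimes>\<^sub>M borel)"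
    by (simp add: split_def)
qed

lemma Pair_m1:
  assumes xp: "xp \<in> space P"
  shows "snd xp \<in> probs" "(\<lambda>y. (xp, y)) \<in> measurable (snd xp) (XPY \<Otimes>\<^sub>M borel)"
    "(\<lambda>y. (fst xp, y)) \<in> measurable (snd xp) (borel \<Otimes>\<^sub>M borel)"
proof -
  show sp: "snd xp \<in> probs" using xp unfolding spP mem_Times_iff by (rule conjunct2)
  have "xp \<in> space XPY" using xp sets_eq_imp_space_eq[OF sP] by simp
  then show "(\<lambda>y. (xp, y)) \<in> measurable (snd xp) (XPY \<Otimes>\<^sub>M borel)"
    unfolding measurable_cong_sets[OF probsD(2)[OF sp] refl] by (rule measurable_Pair1')
  have fb: "fst xp \<in> space (borel :: 'a measure)" by simp
  show "(\<lambda>y. (fst xp, y)) \<in> measurable (snd xp) (borel \<Otimes>\<^sub>M borel)"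
    unfolding measurable_cong_sets[OF probsD(2)[OF sp] refl] by (rule measurable_Pair1'[OF fb])
qed

lemma K2p: "xp \<in> space P \<Longrightarrow> prob_space (K2 xp)"
  unfolding K2_def by (rule prob_space.prob_space_distr[OF probsD(1)[OF Pair_m1(1)] Pair_m1(2)])

lemma K3p: "xp \<in> space P \<Longrightarrow> prob_space (K3 xp)"
  unfolding K3_def by (rule prob_space.prob_space_distr[OF probsD(1)[OF Pair_m1(1)] Pair_m1(3)])

lemma MMp: "prob_space MM"
  unfolding MM_def using K2p K2m by (intro prob_space.prob_space_bind[OF Pp]) auto

lemma RRp: "prob_space RR"
  unfolding RR_def using K3p K3m by (intro prob_space.prob_space_bind[OF Pp]) auto

lemma sMM: "sets MM = sets (XPY \<Otimes>\<^sub>M borel)"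
  unfolding MM_def by (rule sets_bind_measurable[OF K2m neP])

lemma sRR: "sets RR = sets (borel \<Otimes>\<^sub>M borel)"
  unfolding RR_def by (rule sets_bind_measurable[OF K3m neP])

lemma spMM: "space MM = (UNIV \<times> probs) \<times> UNIV"
proof -
  have "space MM = space (XPY \<Otimes>\<^sub>M borel)" by (rule sets_eq_imp_space_eq[OF sMM])
  also have "\<dots> = space XPY \<times> UNIV" by (simp add: space_pair_measure)
  finally show ?thesis by (simp add: space_XPY)
qed


lemma emeasure_MM:
  assumes "C \<in> sets (XPY \<Otimes>\<^sub>M borel)"
  shows "emeasure MM C = (\<integral>\<^sup>+xp. emeasure (snd xp) (Pair xp -` C) \<partial>P)"
  unfolding MM_def
proof (subst emeasure_bind[OF neP K2m assms], rule nn_integral_cong)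
  fix xp assume xp: "xp \<in> space P"
  note sp = Pair_m1(1)[OF xp] and m = Pair_m1(2)[OF xp]
  show "emeasure (K2 xp) C = emeasure (snd xp) (Pair xp -` C)"
    unfolding K2_def using emeasure_distr[OF m assms] probs_space[OF sp] by simp
qed

lemma emeasure_RR:
  assumes "C \<in> sets (borel \<Otimes>\<^sub>M borel)"
  shows "emeasure RR C = (\<integral>\<^sup>+xp. emeasure (snd xp) (Pair (fst xp) -` C) \<partial>P)"
  unfolding RR_def
proof (subst emeasure_bind[OF neP K3m assms], rule nn_integral_cong)
  fix xp assume xp: "xp \<in> space P"
  note sp = Pair_m1(1)[OF xp] and m = Pair_m1(3)[OF xp]
  show "emeasure (K3 xp) C = emeasure (snd xp) (Pair (fst xp) -` C)"
    unfolding K3_def using emeasure_distr[OF m assms] probs_space[OF sp] by simp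
qed

end

context part2
begin

lemma fstMM: "fst \<in> measurable MM XPY"
  unfolding measurable_cong_sets[OF sMM refl] by (rule measurable_fst)

lemma sndMM: "snd \<in> measurable MM borel"
  unfolding measurable_cong_sets[OF sMM refl] by (rule measurable_snd)

lemma spP': "xp \<in> space P \<Longrightarrow> snd xp \<in> probs"
  using spP by (auto simp: mem_Times_iff)

lemma emeasure_snd_UNIV: "xp \<in> space P \<Longrightarrow> emeasure (snd xp) UNIV = 1"
  using spP'[of xp] probsD[of "snd xp"] probs_space[of "snd xp"]
  by (metis prob_space.emeasure_space_1)

lemma distr_MM_fst: "distr MM XPY fst = P"
proof (rule measure_eqI)
  show "sets (distr MM XPY fst) = sets P" using sP by simp
  fix A assume "A \<in> sets (distr MM XPY fst)"
  then have A: "A \<in> sets XPY" by simp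
  have C: "fst -` A \<inter> space MM \<in> sets (XPY \<Otimes>\<^sub>M borel)"
    using measurable_sets[OF fstMM A] sMM by simp
  have "emeasure (distr MM XPY fst) A = emeasure MM (fst -` A \<inter> space MM)"
    by (rule emeasure_distr[OF fstMM A])
  also have "\<dots> = (\<integral>\<^sup>+xp. emeasure (snd xp) (Pair xp -` (fst -` A \<inter> space MM)) \<partial>P)"
    by (rule emeasure_MM[OF C])
  also have "\<dots> = (\<integral>\<^sup>+xp. indicator A xp \<partial>P)"
  proof (rule nn_integral_cong)
    fix xp assume xp: "xp \<in> space P"
    have "Pair xp -` (fst -` A \<inter> space MM) = (if xp \<in> A then UNIV else {})"
      using xp spP unfolding spMM by auto
    then show "emeasure (snd xp) (Pair xp -` (fst -` A \<inter> space MM)) = indicator A xp"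
      using emeasure_snd_UNIV[OF xp] by (simp add: indicator_def)
  qed
  also have "\<dots> = emeasure P A" using A sP by (simp add: nn_integral_indicator)
  finally show "emeasure (distr MM XPY fst) A = emeasure P A" .
qed

lemma RR_eq:
  assumes "is_intensity P Q"
  shows "RR = Q"
proof -
  have Qp: "prob_space Q" and sQ: "sets Q = sets (borel \<Otimes>\<^sub>M borel)"
    and QI: "\<And>f :: 'a \<times> 'b \<Rightarrow> real. continuous_on UNIV f \<Longrightarrow> bounded (range f) \<Longrightarrow>
        (\<integral>z. f z \<partial>Q) = (\<integral>xp. (\<integral>y. f (fst xp, y) \<partial>(snd xp)) \<partial>P)"
    using assms unfolding is_intensity_def by auto
  show ?thesis
  proof (rule finite_measure_eq_bcont)
    show "finite_measure RR" using RRp by (simp add: prob_space_def)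
    show "finite_measure Q" using Qp by (simp add: prob_space_def)
    show "sets RR = sets borel" unfolding sRR borel_prod ..
    show "sets Q = sets borel" unfolding sQ borel_prod ..
    fix f :: "'a \<times> 'b \<Rightarrow> real" assume fc: "continuous_on UNIV f" and fb: "bounded (range f)"
    have fm: "f \<in> borel_measurable (borel \<Otimes>\<^sub>M borel)"
      unfolding borel_prod using fc by (rule borel_measurable_continuous_onI)
    obtain B where B: "\<forall>x\<in>range f. norm x \<le> B" using fb unfolding bounded_iff by blast
    have Bf: "\<bar>f z\<bar> \<le> B" for z
    proof -
      have "norm (f z) \<le> B" using B by blast
      then show ?thesis by simp
    qed
    have "(\<integral>z. f z \<partial>RR) = (\<integral>xp. (\<integral>z. f z \<partial>K3 xp) \<partial>P)"
      unfolding RR_def by (rule integral_bind_bounded[OF K3m fm Bf Pp K3p])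
    also have "\<dots> = (\<integral>xp. (\<integral>y. f (fst xp, y) \<partial>snd xp) \<partial>P)"
    proof (rule Bochner_Integration.integral_cong[OF refl])
      fix xp assume xp: "xp \<in> space P"
      show "(\<integral>z. f z \<partial>K3 xp) = (\<integral>y. f (fst xp, y) \<partial>snd xp)"
        unfolding K3_def by (rule integral_distr[OF Pair_m1(3)[OF xp] fm])
    qed
    also have "\<dots> = (\<integral>z. f z \<partial>Q)" using QI[OF fc fb] by simp
    finally show "(\<integral>z. f z \<partial>RR) = (\<integral>z. f z \<partial>Q)" .
  qed
qed

lemma distr_MM_X: "distr MM borel (\<lambda>\<omega>. fst (fst \<omega>)) = distr RR borel fst"
proof (rule measure_eqI)
  show "sets (distr MM borel (\<lambda>\<omega>. fst (fst \<omega>))) = sets (distr RR borel fst)" by simp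
  fix A assume "A \<in> sets (distr MM borel (\<lambda>\<omega>. fst (fst \<omega>)))"
  then have A: "A \<in> sets (borel :: 'a measure)" by simp
  have f1: "(\<lambda>\<omega>. fst (fst \<omega>)) \<in> measurable MM borel"
    using measurable_compose[OF fstMM] unfolding XPY_def by (metis measurable_fst)
  have f2: "fst \<in> measurable RR borel" unfolding measurable_cong_sets[OF sRR refl] by (rule measurable_fst)
  have C1: "(\<lambda>\<omega>. fst (fst \<omega>)) -` A \<inter> space MM \<in> sets (XPY \<Otimes>\<^sub>M borel)"
    using measurable_sets[OF f1 A] sMM by simp
  have C2: "fst -` A \<inter> space RR \<in> sets (borel \<Otimes>\<^sub>M borel)"
    using measurable_sets[OF f2 A] sRR by simp
  have spRR: "space RR = UNIV" using sRR by (metis sets_eq_imp_space_eq space_pair_measure space_borel UNIV_Times_UNIV)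
  have "emeasure (distr MM borel (\<lambda>\<omega>. fst (fst \<omega>))) A = emeasure MM ((\<lambda>\<omega>. fst (fst \<omega>)) -` A \<inter> space MM)"
    by (rule emeasure_distr[OF f1 A])
  also have "\<dots> = (\<integral>\<^sup>+xp. emeasure (snd xp) (Pair xp -` ((\<lambda>\<omega>. fst (fst \<omega>)) -` A \<inter> space MM)) \<partial>P)"
    by (rule emeasure_MM[OF C1])
  also have "\<dots> = (\<integral>\<^sup>+xp. emeasure (snd xp) (Pair (fst xp) -` (fst -` A \<inter> space RR)) \<partial>P)"
  proof (rule nn_integral_cong)
    fix xp assume xp: "xp \<in> space P"
    have "Pair xp -` ((\<lambda>\<omega>. fst (fst \<omega>)) -` A \<inter> space MM) = Pair (fst xp) -` (fst -` A \<inter> space RR)"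
      using xp spP unfolding spMM spRR by auto
    then show "emeasure (snd xp) (Pair xp -` ((\<lambda>\<omega>. fst (fst \<omega>)) -` A \<inter> space MM)) =
        emeasure (snd xp) (Pair (fst xp) -` (fst -` A \<inter> space RR))" by simp
  qed
  also have "\<dots> = emeasure RR (fst -` A \<inter> space RR)" by (rule emeasure_RR[OF C2, symmetric])
  also have "\<dots> = emeasure (distr RR borel fst) A" by (rule emeasure_distr[OF f2 A, symmetric])
  finally show "emeasure (distr MM borel (\<lambda>\<omega>. fst (fst \<omega>))) A = emeasure (distr RR borel fst) A" .
qed

lemma distr_MM_Y: "distr MM borel snd = distr RR borel snd"
proof (rule measure_eqI)
  show "sets (distr MM borel snd) = sets (distr RR borel snd)" by simp
  fix A assume "A \<in> sets (distr MM borel snd)"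
  then have A: "A \<in> sets (borel :: 'b measure)" by simp
  have f1: "snd \<in> measurable MM borel" by (rule sndMM)
  have f2: "snd \<in> measurable RR borel" unfolding measurable_cong_sets[OF sRR refl] by (rule measurable_snd)
  have C1: "snd -` A \<inter> space MM \<in> sets (XPY \<Otimes>\<^sub>M borel)"
    using measurable_sets[OF f1 A] sMM by simp
  have C2: "snd -` A \<inter> space RR \<in> sets (borel \<Otimes>\<^sub>M borel)"
    using measurable_sets[OF f2 A] sRR by simp
  have spRR: "space RR = UNIV" using sRR by (metis sets_eq_imp_space_eq space_pair_measure space_borel UNIV_Times_UNIV)
  have "emeasure (distr MM borel snd) A = emeasure MM (snd -` A \<inter> space MM)"
    by (rule emeasure_distr[OF f1 A])
  also have "\<dots> = (\<integral>\<^sup>+xp. emeasure (snd xp) (Pair xp -` (snd -` A \<inter> space MM)) \<partial>P)"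
    by (rule emeasure_MM[OF C1])
  also have "\<dots> = (\<integral>\<^sup>+xp. emeasure (snd xp) (Pair (fst xp) -` (snd -` A \<inter> space RR)) \<partial>P)"
  proof (rule nn_integral_cong)
    fix xp assume xp: "xp \<in> space P"
    have "Pair xp -` (snd -` A \<inter> space MM) = Pair (fst xp) -` (snd -` A \<inter> space RR)"
      using xp spP unfolding spMM spRR by auto
    then show "emeasure (snd xp) (Pair xp -` (snd -` A \<inter> space MM)) =
        emeasure (snd xp) (Pair (fst xp) -` (snd -` A \<inter> space RR))" by simp
  qed
  also have "\<dots> = emeasure RR (snd -` A \<inter> space RR)" by (rule emeasure_RR[OF C2, symmetric])
  also have "\<dots> = emeasure (distr RR borel snd) A" by (rule emeasure_distr[OF f2 A, symmetric])
  finally show "emeasure (distr MM borel snd) A = emeasure (distr RR borel snd) A" .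
qed

end

context part2
begin

definition FF1 where "FF1 = vimage_algebra (space MM) fst XPY"

lemma fst_in: "fst \<in> space MM \<rightarrow> space XPY"
  using measurable_space[OF fstMM] by blast

lemma fstF1: "fst \<in> measurable FF1 XPY"
  unfolding FF1_def by (rule measurable_vimage_algebra1[OF fst_in])

lemma sets_FF1: "sets FF1 = {fst -` A \<inter> space MM | A. A \<in> sets XPY}"
  unfolding FF1_def by (rule sets_vimage_algebra2[OF fst_in])

lemma spFF1: "space FF1 = space MM" unfolding FF1_def by simp

lemma subF1: "subalgebra MM FF1"
  unfolding subalgebra_def
proof
  show "space FF1 = space MM" by (rule spFF1)
  show "sets FF1 \<subseteq> sets MM" unfolding sets_FF1 using measurable_sets[OF fstMM] by auto
qed

lemma subMM: "subalgebra MM MM" unfolding subalgebra_def by simp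

lemma XF1: "(\<lambda>\<omega>. fst (fst \<omega>)) \<in> borel_measurable FF1"
proof -
  have "fst \<in> measurable XPY borel" unfolding XPY_def by (rule measurable_fst)
  then show ?thesis using measurable_compose[OF fstF1] by blast
qed

lemma proc: "one_step_process MM FF1 MM (\<lambda>\<omega>. fst (fst \<omega>)) snd"
  unfolding one_step_process_def using MMp subMM subF1 XF1 sndMM by blast

lemma condlaw: "is_cond_law MM FF1 snd (\<lambda>\<omega>. snd (fst \<omega>))"
  unfolding is_cond_law_def
proof (intro conjI ballI)
  fix \<omega> assume "\<omega> \<in> space MM"
  then show "snd (fst \<omega>) \<in> probs" unfolding spMM by (auto simp: mem_Times_iff)
next
  fix B :: "'b set" assume B: "B \<in> sets borel"
  have h: "(\<lambda>xp. emeasure (snd xp) B) \<in> borel_measurable (XPY :: ('a \<times> 'b measure) measure)"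
    by (rule measurable_compose[OF snd_subprob measurable_emeasure_subprob_algebra[OF B]])
  show "(\<lambda>\<omega>. emeasure (snd (fst \<omega>)) B) \<in> borel_measurable FF1"
    using measurable_compose[OF fstF1 h] by simp
next
  fix B :: "'b set" and A assume B: "B \<in> sets borel" and "A \<in> sets FF1"
  have h: "(\<lambda>xp. emeasure (snd xp) B) \<in> borel_measurable (XPY :: ('a \<times> 'b measure) measure)"
    by (rule measurable_compose[OF snd_subprob measurable_emeasure_subprob_algebra[OF B]])
  show "emeasure MM (A \<inter> snd -` B \<inter> space MM) = (\<integral>\<^sup>+\<omega>\<in>A. emeasure (snd (fst \<omega>)) B \<partial>MM)"
  proof -
    from \<open>A \<in> sets FF1\<close> obtain A' where A': "A = fst -` A' \<inter> space MM" "A' \<in> sets XPY" unfolding sets_FF1 by blast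
    have C: "A \<inter> snd -` B \<inter> space MM \<in> sets (XPY \<Otimes>\<^sub>M borel)"
    proof -
      have "A \<in> sets MM" using subF1 \<open>A \<in> sets FF1\<close> unfolding subalgebra_def by blast
      moreover have "snd -` B \<inter> space MM \<in> sets MM" using measurable_sets[OF sndMM B] .
      ultimately have "A \<inter> (snd -` B \<inter> space MM) \<in> sets MM" by blast
      then show ?thesis using sMM by (simp add: Int_assoc)
    qed
    define hh where "hh xp = emeasure (snd xp) B * indicator A' xp" for xp
    have hm: "hh \<in> borel_measurable XPY" unfolding hh_def using h A'(2) by measurable
    have "emeasure MM (A \<inter> snd -` B \<inter> space MM) = (\<integral>\<^sup>+xp. emeasure (snd xp) (Pair xp -` (A \<inter> snd -` B \<inter> space MM)) \<partial>P)"
      by (rule emeasure_MM[OF C])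
    also have "\<dots> = (\<integral>\<^sup>+xp. hh xp \<partial>P)"
    proof (rule nn_integral_cong)
      fix xp assume xp: "xp \<in> space P"
      have "Pair xp -` (A \<inter> snd -` B \<inter> space MM) = (if xp \<in> A' then B else {})"
        using xp spP unfolding A'(1) spMM by auto
      then show "emeasure (snd xp) (Pair xp -` (A \<inter> snd -` B \<inter> space MM)) = hh xp"
        unfolding hh_def by (simp add: indicator_def)
    qed
    also have "\<dots> = (\<integral>\<^sup>+xp. hh xp \<partial>distr MM XPY fst)" using distr_MM_fst by simp
    also have "\<dots> = (\<integral>\<^sup>+\<omega>. hh (fst \<omega>) \<partial>MM)"
      using hm by (intro nn_integral_distr[OF fstMM]) simp
    also have "\<dots> = (\<integral>\<^sup>+\<omega>\<in>A. emeasure (snd (fst \<omega>)) B \<partial>MM)"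
    proof (rule nn_integral_cong)
      fix \<omega> assume "\<omega> \<in> space MM"
      then show "hh (fst \<omega>) = emeasure (snd (fst \<omega>)) B * indicator A \<omega>"
        unfolding hh_def A'(1) by (simp add: indicator_def)
    qed
    finally show ?thesis .
  qed
qed

lemma star:
  assumes k: "is_cond_law MM FF1 snd \<kappa>" and F: "F \<in> borel_measurable XPY"
  shows "ext_integrable MM (\<lambda>\<omega>. F (fst (fst \<omega>), \<kappa> \<omega>)) = ext_integrable P F \<and>
         ext_integral MM (\<lambda>\<omega>. F (fst (fst \<omega>), \<kappa> \<omega>)) = ext_integral P F"
proof -
  have ae: "AE \<omega> in MM. \<kappa> \<omega> = snd (fst \<omega>)" by (rule cond_law_AE_eq[OF MMp subF1 k condlaw])
  have "AE \<omega> in MM. F (fst (fst \<omega>), \<kappa> \<omega>) = F (fst \<omega>)" using ae by eventually_elim simp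
  from ext_transfer[OF F fstMM this] show ?thesis unfolding distr_MM_fst .
qed

end

lemma part2_main:
  fixes \<mu> :: "'a::polish_space measure" and \<nu> :: "'b::polish_space measure"
  assumes P: "P \<in> Lambda \<mu> \<nu>"
  shows "\<exists>(M :: (('a \<times> 'b measure) \<times> 'b) measure) F1 F2 X Y.
          one_step_process M F1 F2 X Y \<and> distr M borel X = \<mu> \<and> distr M borel Y = \<nu> \<and>
          (\<exists>\<kappa>. is_cond_law M F1 Y \<kappa>) \<and>
          (\<forall>\<kappa>. is_cond_law M F1 Y \<kappa> \<longrightarrow>
             (\<forall>F \<in> borel_measurable XPY.
                ext_integrable P F \<longrightarrow>
                  ext_integrable M (\<lambda>\<omega>. F (X \<omega>, \<kappa> \<omega>)) \<and>
                  ext_integral M (\<lambda>\<omega>. F (X \<omega>, \<kappa> \<omega>)) = ext_integral P F))"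
proof -
  obtain Q where Pp: "prob_space P" and sP: "sets P = sets XPY" and I: "is_intensity P Q"
    and m1: "distr Q borel fst = \<mu>" and m2: "distr Q borel snd = \<nu>"
    using P unfolding Lambda_def by blast
  interpret part2 P by (rule part2.intro[OF Pp sP])
  have RQ: "RR = Q" by (rule RR_eq[OF I])
  have c1: "one_step_process MM FF1 MM (\<lambda>\<omega>. fst (fst \<omega>)) snd" by (rule proc)
  have c2: "distr MM borel (\<lambda>\<omega>. fst (fst \<omega>)) = \<mu>" using distr_MM_X RQ m1 by simp
  have c3: "distr MM borel snd = \<nu>" using distr_MM_Y RQ m2 by simp
  have c4: "\<exists>\<kappa>. is_cond_law MM FF1 snd \<kappa>" using condlaw by blast
  have c5: "\<forall>\<kappa>. is_cond_law MM FF1 snd \<kappa> \<longrightarrow>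
             (\<forall>F \<in> borel_measurable XPY.
                ext_integrable P F \<longrightarrow>
                  ext_integrable MM (\<lambda>\<omega>. F (fst (fst \<omega>), \<kappa> \<omega>)) \<and>
                  ext_integral MM (\<lambda>\<omega>. F (fst (fst \<omega>), \<kappa> \<omega>)) = ext_integral P F)"
    using star by blast
  show ?thesis
    by (rule exI[of _ MM], rule exI[of _ FF1], rule exI[of _ MM], rule exI[of _ "\<lambda>\<omega>. fst (fst \<omega>)"], rule exI[of _ snd])
       (intro conjI c1 c2 c3 c4 c5)
qed

theorem lemma3p2:
  fixes \<mu> :: "'a::polish_space measure" and \<nu> :: "'b::polish_space measure"
  assumes "prob_space \<mu>" "sets \<mu> = sets borel"
      and "prob_space \<nu>" "sets \<nu> = sets borel"
  shows
    "(\<forall>(M :: 'c measure) F1 F2 (X :: 'c \<Rightarrow> 'a) (Y :: 'c \<Rightarrow> 'b).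
        one_step_process M F1 F2 X Y \<and> distr M borel X = \<mu> \<and> distr M borel Y = \<nu> \<longrightarrow>
        (\<exists>P \<in> Lambda \<mu> \<nu>. \<forall>\<kappa>. is_cond_law M F1 Y \<kappa> \<longrightarrow>
           (\<forall>F \<in> borel_measurable XPY.
              ext_integrable M (\<lambda>\<omega>. F (X \<omega>, \<kappa> \<omega>)) \<longrightarrow>
                ext_integrable P F \<and>
                ext_integral M (\<lambda>\<omega>. F (X \<omega>, \<kappa> \<omega>)) = ext_integral P F)))
     \<and>
     (\<forall>P \<in> Lambda \<mu> \<nu>.
        \<exists>(M :: (('a \<times> 'b measure) \<times> 'b) measure) F1 F2 X Y.
          one_step_process M F1 F2 X Y \<and> distr M borel X = \<mu> \<and> distr M borel Y = \<nu> \<and>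
          (\<exists>\<kappa>. is_cond_law M F1 Y \<kappa>) \<and>
          (\<forall>\<kappa>. is_cond_law M F1 Y \<kappa> \<longrightarrow>
             (\<forall>F \<in> borel_measurable XPY.
                ext_integrable P F \<longrightarrow>
                  ext_integrable M (\<lambda>\<omega>. F (X \<omega>, \<kappa> \<omega>)) \<and>
                  ext_integral M (\<lambda>\<omega>. F (X \<omega>, \<kappa> \<omega>)) = ext_integral P F)))"
proof (rule conjI)
  show "\<forall>(M :: 'c measure) F1 F2 (X :: 'c \<Rightarrow> 'a) (Y :: 'c \<Rightarrow> 'b).
        one_step_process M F1 F2 X Y \<and> distr M borel X = \<mu> \<and> distr M borel Y = \<nu> \<longrightarrow>
        (\<exists>P \<in> Lambda \<mu> \<nu>. \<forall>\<kappa>. is_cond_law M F1 Y \<kappa> \<longrightarrow>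
           (\<forall>F \<in> borel_measurable XPY.
              ext_integrable M (\<lambda>\<omega>. F (X \<omega>, \<kappa> \<omega>)) \<longrightarrow>
                ext_integrable P F \<and>
                ext_integral M (\<lambda>\<omega>. F (X \<omega>, \<kappa> \<omega>)) = ext_integral P F))"
  proof (intro allI impI)
    fix M :: "'c measure" and F1 F2 and X :: "'c \<Rightarrow> 'a" and Y :: "'c \<Rightarrow> 'b"
    assume H: "one_step_process M F1 F2 X Y \<and> distr M borel X = \<mu> \<and> distr M borel Y = \<nu>"
    then have proc: "one_step_process M F1 F2 X Y" and dX: "distr M borel X = \<mu>" and dY: "distr M borel Y = \<nu>"
      by auto
    show "\<exists>P \<in> Lambda \<mu> \<nu>. \<forall>\<kappa>. is_cond_law M F1 Y \<kappa> \<longrightarrow>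
           (\<forall>F \<in> borel_measurable XPY.
              ext_integrable M (\<lambda>\<omega>. F (X \<omega>, \<kappa> \<omega>)) \<longrightarrow>
                ext_integrable P F \<and>
                ext_integral M (\<lambda>\<omega>. F (X \<omega>, \<kappa> \<omega>)) = ext_integral P F)"
    proof (cases "\<exists>\<kappa>. is_cond_law M F1 Y \<kappa>")
      case False
      have "distr \<mu> XPY (\<lambda>x. (x, \<nu>)) \<in> Lambda \<mu> \<nu>" by (rule lambda_nonempty[OF assms])
      then show ?thesis using False by blast
    next
      case True
      then obtain \<kappa>0 where k0: "is_cond_law M F1 Y \<kappa>0" by blast
      have Mp: "prob_space M" and sub2: "subalgebra M F2" and sub21: "subalgebra F2 F1"
        and XF1: "X \<in> borel_measurable F1"
        using proc unfolding one_step_process_def by auto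
      have sub: "subalgebra M F1" by (rule sub_trans[OF sub2 sub21])
      have spF1: "space F1 = space M" using sub unfolding subalgebra_def by simp
      have X: "X \<in> borel_measurable M" by (rule measurable_from_subalg[OF sub XF1])
      have cl1: "\<forall>\<omega>\<in>space F1. \<kappa>0 \<omega> \<in> probs" using k0 spF1 unfolding is_cond_law_def by simp
      have cl2: "\<forall>B\<in>sets borel. (\<lambda>\<omega>. emeasure (\<kappa>0 \<omega>) B) \<in> borel_measurable F1"
        using k0 unfolding is_cond_law_def by simp
      have kM: "\<kappa>0 \<in> measurable M PY" by (rule measurable_from_subalg[OF sub kernel_meas_PY[OF cl1 cl2]])
      have T: "(\<lambda>\<omega>. (X \<omega>, \<kappa>0 \<omega>)) \<in> measurable M XPY" unfolding XPY_def
        by (rule measurable_Pair[OF X kM])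
      define P where "P = distr M XPY (\<lambda>\<omega>. (X \<omega>, \<kappa>0 \<omega>))"
      have PL: "P \<in> Lambda \<mu> \<nu>" unfolding P_def using part1_lambda[OF proc k0] dX dY by simp
      have "\<forall>\<kappa>. is_cond_law M F1 Y \<kappa> \<longrightarrow>
           (\<forall>F \<in> borel_measurable XPY.
              ext_integrable M (\<lambda>\<omega>. F (X \<omega>, \<kappa> \<omega>)) \<longrightarrow>
                ext_integrable P F \<and>
                ext_integral M (\<lambda>\<omega>. F (X \<omega>, \<kappa> \<omega>)) = ext_integral P F)"
      proof (intro allI impI ballI)
        fix \<kappa> and F :: "'a \<times> 'b measure \<Rightarrow> ereal" assume k: "is_cond_law M F1 Y \<kappa>" and F: "F \<in> borel_measurable XPY"
        have ae: "AE \<omega> in M. \<kappa> \<omega> = \<kappa>0 \<omega>" by (rule cond_law_AE_eq[OF Mp sub k k0])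
        have "AE \<omega> in M. F (X \<omega>, \<kappa> \<omega>) = F (X \<omega>, \<kappa>0 \<omega>)" using ae by eventually_elim simp
        from ext_transfer[OF F T this]
        have tr: "ext_integrable M (\<lambda>\<omega>. F (X \<omega>, \<kappa> \<omega>)) = ext_integrable P F \<and>
            ext_integral M (\<lambda>\<omega>. F (X \<omega>, \<kappa> \<omega>)) = ext_integral P F"
          unfolding P_def .
        assume "ext_integrable M (\<lambda>\<omega>. F (X \<omega>, \<kappa> \<omega>))"
        then show "ext_integrable P F \<and> ext_integral M (\<lambda>\<omega>. F (X \<omega>, \<kappa> \<omega>)) = ext_integral P F"
          using tr by simp
      qed
      then show ?thesis using PL by blast
    qed
  qed
next
  show "\<forall>P \<in> Lambda \<mu> \<nu>.
        \<exists>(M :: (('a \<times> 'b measure) \<times> 'b) measure) F1 F2 X Y.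
          one_step_process M F1 F2 X Y \<and> distr M borel X = \<mu> \<and> distr M borel Y = \<nu> \<and>
          (\<exists>\<kappa>. is_cond_law M F1 Y \<kappa>) \<and>
          (\<forall>\<kappa>. is_cond_law M F1 Y \<kappa> \<longrightarrow>
             (\<forall>F \<in> borel_measurable XPY.
                ext_integrable P F \<longrightarrow>
                  ext_integrable M (\<lambda>\<omega>. F (X \<omega>, \<kappa> \<omega>)) \<and>
                  ext_integral M (\<lambda>\<omega>. F (X \<omega>, \<kappa> \<omega>)) = ext_integral P F))"
    using part2_main by blast
qed

end
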